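(* Let $\Omega\subset\mathbb{R}^N$ be a bounded open set, $\sigma>0$, $h:[0,\sigma)\to\mathbb{R}^+$ continuous, strictly increasing with $\lim_{s\to\sigma^-}h(s)=+\infty$, and suppose there exists $\gamma\in[1,2)$ with $\lim_{s\to\sigma^-}(\sigma-s)^\gamma h(s)=C>0$. Let $f\in L^p(\Omega)$, $p>N/2$, $f\ge0$, and $\lambda>0$. Let $H(s)=\int_0^s h$, $\psi(s)=\int_0^s e^{-H(t)}dt$, $L=\psi(\sigma)$, and $g(s)=e^{-H(\psi^{-1}(s))}$ on $[0,L]$ ($g(L)=0$). Let $\underline v,\overline v\in H^1(\Omega)$ take values in $[0,L]$ a.e., satisfy $-\Delta\underline v\le\lambda f g(\underline v)$ and $-\Delta\overline v\ge\lambda f g(\overline v)$ in $H^{-1}(\Omega)$ (i.e. tested against nonnegative functions of $H^1_0(\Omega)$), and $(\underline v-\overline v)\le0$ on $\partial\Omega$. Then $\underline v\le\overline v$ a.e. in $\Omega$. *)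

theory Defs
  imports "HOL-Analysis.Analysis"
begin

definition pd :: "'n::finite \<Rightarrow> (real^'n \<Rightarrow> real) \<Rightarrow> real^'n \<Rightarrow> real" where
  "pd i \<phi> x = frechet_derivative \<phi> (at x) (axis i 1)"

fun Ck :: "nat \<Rightarrow> (real^'n::finite \<Rightarrow> real) \<Rightarrow> bool" where
  "Ck 0 \<phi> = continuous_on UNIV \<phi>"
| "Ck (Suc k) \<phi> = (continuous_on UNIV \<phi> \<and> (\<forall>x. \<phi> differentiable (at x)) \<and> (\<forall>i. Ck k (pd i \<phi>)))"

definition smooth :: "(real^'n::finite \<Rightarrow> real) \<Rightarrow> bool" where
  "smooth \<phi> \<longleftrightarrow> (\<forall>k. Ck k \<phi>)"

definition test_fn :: "(real^'n::finite) set \<Rightarrow> (real^'n \<Rightarrow> real) \<Rightarrow> bool" where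
  "test_fn \<Omega> \<phi> \<longleftrightarrow> smooth \<phi> \<and> compact (closure {x. \<phi> x \<noteq> 0}) \<and> closure {x. \<phi> x \<noteq> 0} \<subseteq> \<Omega>"

definition L2 :: "(real^'n::finite) set \<Rightarrow> (real^'n \<Rightarrow> real) \<Rightarrow> bool" where
  "L2 \<Omega> u \<longleftrightarrow> u \<in> borel_measurable (lebesgue_on \<Omega>) \<and> integrable (lebesgue_on \<Omega>) (\<lambda>x. (u x)^2)"

definition Lp :: "real \<Rightarrow> (real^'n::finite) set \<Rightarrow> (real^'n \<Rightarrow> real) \<Rightarrow> bool" where
  "Lp p \<Omega> u \<longleftrightarrow> u \<in> borel_measurable (lebesgue_on \<Omega>) \<and> integrable (lebesgue_on \<Omega>) (\<lambda>x. \<bar>u x\<bar> powr p)"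

definition weak_grad :: "(real^'n::finite) set \<Rightarrow> (real^'n \<Rightarrow> real) \<Rightarrow> (real^'n \<Rightarrow> real^'n) \<Rightarrow> bool" where
  "weak_grad \<Omega> u G \<longleftrightarrow> (\<forall>i. L2 \<Omega> (\<lambda>x. G x $ i)) \<and>
     (\<forall>\<phi> i. test_fn \<Omega> \<phi> \<longrightarrow>
        integral\<^sup>L (lebesgue_on \<Omega>) (\<lambda>x. u x * pd i \<phi> x) = - integral\<^sup>L (lebesgue_on \<Omega>) (\<lambda>x. G x $ i * \<phi> x))"

definition H1 :: "(real^'n::finite) set \<Rightarrow> (real^'n \<Rightarrow> real) \<Rightarrow> bool" where
  "H1 \<Omega> u \<longleftrightarrow> L2 \<Omega> u \<and> (\<exists>G. weak_grad \<Omega> u G)"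

definition wgrad :: "(real^'n::finite) set \<Rightarrow> (real^'n \<Rightarrow> real) \<Rightarrow> real^'n \<Rightarrow> real^'n" where
  "wgrad \<Omega> u = (SOME G. weak_grad \<Omega> u G)"

definition H10 :: "(real^'n::finite) set \<Rightarrow> (real^'n \<Rightarrow> real) \<Rightarrow> bool" where
  "H10 \<Omega> u \<longleftrightarrow> H1 \<Omega> u \<and> (\<exists>\<phi>s. (\<forall>k. test_fn \<Omega> (\<phi>s k)) \<and>
     (\<lambda>k. integral\<^sup>L (lebesgue_on \<Omega>) (\<lambda>x. (\<phi>s k x - u x)^2)
         + (\<Sum>i\<in>UNIV. integral\<^sup>L (lebesgue_on \<Omega>) (\<lambda>x. (pd i (\<phi>s k) x - wgrad \<Omega> u x $ i)^2)))
       \<longlonglongrightarrow> 0)"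

end

theory Submission
  imports Defs
begin

lemma borel_lebesgue_on: "f \<in> borel_measurable borel \<Longrightarrow> f \<in> borel_measurable (lebesgue_on S)"
  by (rule measurable_restrict_space1, rule measurable_completion) simp

lemma Ck_cont: "Ck k f \<Longrightarrow> continuous_on UNIV f"
  by (cases k) auto

lemma Ck_SucD: "Ck (Suc k) f \<Longrightarrow> Ck k f"
proof (induction k arbitrary: f)
  case 0 then show ?case by (simp only: Ck.simps)
next
  case (Suc k)
  from Suc.prems have a: "continuous_on UNIV f" "\<forall>x. f differentiable at x" "\<forall>i. Ck (Suc k) (pd i f)"
    unfolding Ck.simps(2) by blast+
  have "\<forall>i. Ck k (pd i f)" using a(3) Suc.IH by blast
  then show ?case unfolding Ck.simps(2) using a(1,2) by blast
qed

lemma Ck_diff: "Ck (Suc k) f \<Longrightarrow> f differentiable (at x)"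
  by (simp only: Ck.simps)

lemma pd_eq: "(f has_derivative f') (at x) \<Longrightarrow> pd i f x = f' (axis i 1)"
  unfolding pd_def by (metis frechet_derivative_at)

lemma pd_add: "f differentiable (at x) \<Longrightarrow> g differentiable (at x) \<Longrightarrow>
   pd i (\<lambda>y. f y + g y) x = pd i f x + pd i g x"
  unfolding frechet_derivative_works
  by (subst pd_eq[OF has_derivative_add], assumption, assumption) (simp add: pd_def)

lemma pd_mult: "f differentiable (at x) \<Longrightarrow> g differentiable (at x) \<Longrightarrow>
   pd i (\<lambda>y. f y * g y) x = f x * pd i g x + pd i f x * g x"
  unfolding frechet_derivative_works
  by (subst pd_eq[OF has_derivative_mult], assumption, assumption) (simp add: pd_def)

lemma pd_const: "pd i (\<lambda>y. c) x = 0"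
  by (subst pd_eq[OF has_derivative_const]) simp

lemma pd_coord: "pd i (\<lambda>y. y $ j) x = (if j = i then 1 else 0)"
proof -
  have "((\<lambda>y. y $ j) has_derivative (\<lambda>y. y $ j)) (at x)"
    by (rule bounded_linear_imp_has_derivative) (rule bounded_linear_vec_nth)
  then have "pd i (\<lambda>y. y $ j) x = axis i 1 $ j" by (rule pd_eq)
  then show ?thesis by (auto simp: axis_def)
qed

lemma cont_coord: "continuous_on S (\<lambda>x::real^'n. x $ j)"
  by (intro linear_continuous_on bounded_linear_vec_nth)

lemma Ck_const: "Ck k (\<lambda>x. c)"
proof (induction k arbitrary: c)
  case 0 then show ?case unfolding Ck.simps(1) by (rule continuous_on_const)
next
  case (Suc k)
  have e: "pd i (\<lambda>x. c) = (\<lambda>x. 0)" for i by (simp add: fun_eq_iff pd_const)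
  show ?case unfolding Ck.simps(2) e using Suc.IH by (simp add: continuous_on_const)
qed

lemma Ck_coord: "Ck k (\<lambda>x. x $ j)"
proof (cases k)
  case 0 then show ?thesis unfolding 0 Ck.simps(1) using cont_coord by blast
next
  case (Suc m)
  have "(\<lambda>x. pd i (\<lambda>y. y $ j) x) = (\<lambda>x. if j = i then 1 else 0)" for i
    by (simp add: pd_coord)
  then have e: "pd i (\<lambda>y. y $ j) = (\<lambda>x. if j = i then 1 else 0)" for i by (simp add: fun_eq_iff)
  have d: "(\<lambda>y. y $ j) differentiable (at x)" for x
    by (intro bounded_linear_imp_differentiable bounded_linear_vec_nth)
  show ?thesis unfolding Suc Ck.simps(2) e using d cont_coord Ck_const by blast
qed

lemma Ck_add: "Ck k f \<Longrightarrow> Ck k g \<Longrightarrow> Ck k (\<lambda>x. f x + g x)"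
proof (induction k arbitrary: f g)
  case 0 then show ?case unfolding Ck.simps(1) by (rule continuous_on_add)
next
  case (Suc k)
  from Suc.prems(1) have a: "continuous_on UNIV f" "\<forall>x. f differentiable at x" "\<forall>i. Ck k (pd i f)"
    unfolding Ck.simps(2) by blast+
  from Suc.prems(2) have b: "continuous_on UNIV g" "\<forall>x. g differentiable at x" "\<forall>i. Ck k (pd i g)"
    unfolding Ck.simps(2) by blast+
  have e: "pd i (\<lambda>x. f x + g x) = (\<lambda>x. pd i f x + pd i g x)" for i
    using a(2) b(2) by (auto simp: pd_add)
  have "Ck k (pd i (\<lambda>x. f x + g x))" for i
    unfolding e using a(3) b(3) Suc.IH by blast
  moreover have "(\<lambda>x. f x + g x) differentiable (at x)" for x
    using a(2) b(2) by (blast intro: differentiable_add)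
  moreover have "continuous_on UNIV (\<lambda>x. f x + g x)"
    using a(1) b(1) by (rule continuous_on_add)
  ultimately show ?case unfolding Ck.simps(2) by blast
qed

lemma Ck_mult: "Ck k f \<Longrightarrow> Ck k g \<Longrightarrow> Ck k (\<lambda>x. f x * g x)"
proof (induction k arbitrary: f g)
  case 0 then show ?case unfolding Ck.simps(1) by (rule continuous_on_mult)
next
  case (Suc k)
  from Suc.prems(1) have a: "continuous_on UNIV f" "\<forall>x. f differentiable at x" "\<forall>i. Ck k (pd i f)"
    unfolding Ck.simps(2) by blast+
  from Suc.prems(2) have b: "continuous_on UNIV g" "\<forall>x. g differentiable at x" "\<forall>i. Ck k (pd i g)"
    unfolding Ck.simps(2) by blast+
  have fk: "Ck k f" "Ck k g" using Suc.prems Ck_SucD by blast+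
  have e: "pd i (\<lambda>x. f x * g x) = (\<lambda>x. f x * pd i g x + pd i f x * g x)" for i
    using a(2) b(2) by (auto simp: pd_mult)
  have "Ck k (pd i (\<lambda>x. f x * g x))" for i
  proof -
    have "Ck k (\<lambda>x. f x * pd i g x)" using Suc.IH fk(1) b(3) by blast
    moreover have "Ck k (\<lambda>x. pd i f x * g x)" using Suc.IH fk(2) a(3) by blast
    ultimately show ?thesis unfolding e by (rule Ck_add)
  qed
  moreover have "(\<lambda>x. f x * g x) differentiable (at x)" for x
    using a(2) b(2) by (blast intro: differentiable_mult)
  moreover have "continuous_on UNIV (\<lambda>x. f x * g x)"
    using a(1) b(1) by (rule continuous_on_mult)
  ultimately show ?case unfolding Ck.simps(2) by blast
qed

lemma smooth_mult: "smooth f \<Longrightarrow> smooth g \<Longrightarrow> smooth (\<lambda>x. f x * g x)"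
  unfolding smooth_def by (blast intro: Ck_mult)

lemma smooth_pd: "smooth f \<Longrightarrow> smooth (pd i f)"
proof (unfold smooth_def, intro allI)
  fix k assume "\<forall>k. Ck k f"
  then have "Ck (Suc k) f" by blast
  then show "Ck k (pd i f)" unfolding Ck.simps(2) by blast
qed

lemma smooth_diff: "smooth f \<Longrightarrow> f differentiable (at x)"
proof (unfold smooth_def)
  assume "\<forall>k. Ck k f"
  then have "Ck (Suc 0) f" by blast
  then show ?thesis unfolding Ck.simps(2) by blast
qed

lemma smooth_cont: "smooth f \<Longrightarrow> continuous_on UNIV f"
proof (unfold smooth_def)
  assume "\<forall>k. Ck k f"
  then have "Ck 0 f" by blast
  then show ?thesis unfolding Ck.simps(1) .
qed

lemma smooth_coord: "smooth (\<lambda>x. x $ j)"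
  unfolding smooth_def by (simp add: Ck_coord)

lemma compact_closed_subset: "compact S \<Longrightarrow> closed T \<Longrightarrow> T \<subseteq> S \<Longrightarrow> compact T"
  by (metis compact_Int_closed inf.absorb_iff2)

lemma test_fn_mult:
  assumes "test_fn \<Omega> f" "smooth g"
  shows "test_fn \<Omega> (\<lambda>x. g x * f x)"
proof -
  have s: "closure {x. g x * f x \<noteq> 0} \<subseteq> closure {x. f x \<noteq> 0}"
    by (rule closure_mono) (simp add: Collect_mono)
  have "compact (closure {x. f x \<noteq> 0})" "closure {x. f x \<noteq> 0} \<subseteq> \<Omega>" "smooth f"
    using assms unfolding test_fn_def by blast+
  then show ?thesis unfolding test_fn_def
  proof (intro conjI)
    show "smooth (\<lambda>x. g x * f x)" using \<open>smooth f\<close> assms(2) by (rule smooth_mult[rotated])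
    show "compact (closure {x. g x * f x \<noteq> 0})"
      by (rule compact_closed_subset[OF \<open>compact (closure {x. f x \<noteq> 0})\<close> closed_closure s])
    show "closure {x. g x * f x \<noteq> 0} \<subseteq> \<Omega>" using s \<open>closure {x. f x \<noteq> 0} \<subseteq> \<Omega>\<close> by blast
  qed
qed

lemma pd_zero_outside:
  assumes "x \<notin> closure {x. f x \<noteq> 0}"
  shows "pd i f x = 0"
proof -
  have z: "f y = 0" if "y \<in> - closure {x. f x \<noteq> 0}" for y
    using that closure_subset[of "{x. f x \<noteq> 0}"] by blast
  have o: "open (- closure {x. f x \<noteq> 0})" by (rule open_Compl, rule closed_closure)
  have x: "x \<in> - closure {x. f x \<noteq> 0}" using assms by blast
  have "((\<lambda>y. 0::real) has_derivative (\<lambda>h. 0)) (at x)" by (rule has_derivative_const)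
  then have "(f has_derivative (\<lambda>h. 0)) (at x)"
    by (rule has_derivative_transform_within_open[OF _ o x]) (rule z[symmetric])
  from pd_eq[OF this] show ?thesis .
qed

lemma test_fn_pd:
  assumes "test_fn \<Omega> f"
  shows "test_fn \<Omega> (pd i f)"
proof -
  have "{x. pd i f x \<noteq> 0} \<subseteq> closure {x. f x \<noteq> 0}"
    using pd_zero_outside by blast
  then have s: "closure {x. pd i f x \<noteq> 0} \<subseteq> closure {x. f x \<noteq> 0}"
    by (rule closure_minimal) simp
  have "compact (closure {x. f x \<noteq> 0})" "closure {x. f x \<noteq> 0} \<subseteq> \<Omega>" "smooth f"
    using assms unfolding test_fn_def by blast+
  then show ?thesis unfolding test_fn_def
  proof (intro conjI)
    show "smooth (pd i f)" using \<open>smooth f\<close> by (rule smooth_pd)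
    show "compact (closure {x. pd i f x \<noteq> 0})"
      by (rule compact_closed_subset[OF \<open>compact (closure {x. f x \<noteq> 0})\<close> closed_closure s])
    show "closure {x. pd i f x \<noteq> 0} \<subseteq> \<Omega>" using s \<open>closure {x. f x \<noteq> 0} \<subseteq> \<Omega>\<close> by blast
  qed
qed

lemma test_fn_bounded:
  assumes "test_fn \<Omega> f"
  obtains K where "K \<ge> 0" "\<And>x. \<bar>f x\<bar> \<le> K"
proof -
  let ?C = "closure {x. f x \<noteq> 0}"
  have C: "compact ?C" using assms unfolding test_fn_def by blast
  have c: "continuous_on UNIV f" using assms unfolding test_fn_def by (blast intro: smooth_cont)
  have "compact (f ` ?C)" using compact_continuous_image[OF continuous_on_subset[OF c subset_UNIV] C] .
  then have "bounded (f ` ?C)" by (rule compact_imp_bounded)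
  then obtain K where K: "\<forall>y\<in>f ` ?C. norm y \<le> K" unfolding bounded_iff by blast
  have "\<bar>f x\<bar> \<le> max K 0" for x
  proof (cases "x \<in> ?C")
    case True
    then have "f x \<in> f ` ?C" by (rule imageI)
    then have "norm (f x) \<le> K" using K by blast
    then show ?thesis by simp
  next
    case False then have "f x = 0" using closure_subset[of "{x. f x \<noteq> 0}"] by blast
    then show ?thesis by simp
  qed
  then show ?thesis using that[of "max K 0"] by simp
qed

lemma test_fn_meas: "test_fn \<Omega> f \<Longrightarrow> f \<in> borel_measurable (lebesgue_on S)"
  unfolding test_fn_def by (intro borel_lebesgue_on borel_measurable_continuous_onI smooth_cont) (elim conjE)

definition sqi :: "'a measure \<Rightarrow> ('a \<Rightarrow> real) \<Rightarrow> bool" where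
  "sqi M u \<longleftrightarrow> u \<in> borel_measurable M \<and> integrable M (\<lambda>x. (u x)^2)"

lemma abs_mult_le_sq: "\<bar>a * b\<bar> \<le> a\<^sup>2 + (b::real)\<^sup>2"
proof -
  have "0 \<le> (\<bar>a\<bar> - \<bar>b\<bar>)\<^sup>2" by simp
  then have "2 * (\<bar>a\<bar> * \<bar>b\<bar>) \<le> \<bar>a\<bar>\<^sup>2 + \<bar>b\<bar>\<^sup>2" by (simp add: power2_diff)
  moreover have "\<bar>a\<bar>\<^sup>2 = a\<^sup>2" "\<bar>b\<bar>\<^sup>2 = b\<^sup>2" "\<bar>a * b\<bar> = \<bar>a\<bar> * \<bar>b\<bar>" by (simp_all add: abs_mult)
  moreover have "0 \<le> \<bar>a\<bar> * \<bar>b\<bar>" by simp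
  ultimately show ?thesis by linarith
qed

lemma abs_mult_le_sq_t:
  assumes "t > 0" shows "2 * \<bar>a * b\<bar> \<le> t * a\<^sup>2 + (b::real)\<^sup>2 / t"
proof -
  have "0 \<le> (t * \<bar>a\<bar> - \<bar>b\<bar>)\<^sup>2 / t" using assms by simp
  also have "(t * \<bar>a\<bar> - \<bar>b\<bar>)\<^sup>2 / t = t * a\<^sup>2 + b\<^sup>2 / t - 2 * \<bar>a * b\<bar>"
    using assms by (simp add: power2_diff field_simps abs_mult power2_eq_square)
  finally show ?thesis by simp
qed

lemma sqi_int_mult:
  assumes "sqi M u" "sqi M v" shows "integrable M (\<lambda>x. u x * v x)"
proof (rule Bochner_Integration.integrable_bound)
  show "integrable M (\<lambda>x. (u x)\<^sup>2 + (v x)\<^sup>2)" using assms unfolding sqi_def by simp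
  show "(\<lambda>x. u x * v x) \<in> borel_measurable M" using assms unfolding sqi_def by (auto intro: borel_measurable_times)
  show "AE x in M. norm (u x * v x) \<le> norm ((u x)\<^sup>2 + (v x)\<^sup>2)"
    using abs_mult_le_sq by (simp add: abs_mult_le_sq)
qed

lemma sqi_const: "finite_measure M \<Longrightarrow> sqi M (\<lambda>x. c)"
  unfolding sqi_def by (simp add: finite_measure.integrable_const)

lemma sqi_int: "finite_measure M \<Longrightarrow> sqi M u \<Longrightarrow> integrable M u"
  using sqi_int_mult[of M u "\<lambda>x. 1"] sqi_const[of M 1] by simp

lemma sqi_bdd:
  assumes "finite_measure M" "u \<in> borel_measurable M" "AE x in M. \<bar>u x\<bar> \<le> K"
  shows "sqi M u"
  unfolding sqi_def
proof
  show "u \<in> borel_measurable M" by fact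
  show "integrable M (\<lambda>x. (u x)\<^sup>2)"
  proof (rule finite_measure.integrable_const_bound[OF assms(1)])
    show "AE x in M. norm ((u x)\<^sup>2) \<le> K\<^sup>2"
      using assms(3)
    proof eventually_elim
      case (elim x)
      have "\<bar>u x\<bar> \<le> \<bar>K\<bar>" using elim abs_ge_self[of K] by linarith
      then show ?case using abs_le_square_iff[of "u x" K] by simp
    qed
    show "(\<lambda>x. (u x)\<^sup>2) \<in> borel_measurable M" using assms(2) by simp
  qed
qed

lemma sqi_add: "sqi M u \<Longrightarrow> sqi M v \<Longrightarrow> sqi M (\<lambda>x. u x + v x)"
  unfolding sqi_def
proof (elim conjE, intro conjI)
  assume a: "u \<in> borel_measurable M" "integrable M (\<lambda>x. (u x)\<^sup>2)" "v \<in> borel_measurable M" "integrable M (\<lambda>x. (v x)\<^sup>2)"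
  then show "(\<lambda>x. u x + v x) \<in> borel_measurable M" by simp
  have "integrable M (\<lambda>x. u x * v x)" using sqi_int_mult[of M u v] a unfolding sqi_def by simp
  then have "integrable M (\<lambda>x. (u x)\<^sup>2 + (v x)\<^sup>2 + 2 * (u x * v x))" using a by simp
  then show "integrable M (\<lambda>x. (u x + v x)\<^sup>2)" by (simp add: power2_sum algebra_simps)
qed

lemma sqi_cmult: "sqi M u \<Longrightarrow> sqi M (\<lambda>x. c * u x)"
  unfolding sqi_def by (auto simp add: power_mult_distrib intro: borel_measurable_times)

lemma sqi_uminus: "sqi M u \<Longrightarrow> sqi M (\<lambda>x. - u x)"
  using sqi_cmult[of M u "-1"] by simp

lemma sqi_diff: "sqi M u \<Longrightarrow> sqi M v \<Longrightarrow> sqi M (\<lambda>x. u x - v x)"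
  using sqi_add[of M u "\<lambda>x. - v x"] sqi_uminus[of M v] by simp

lemma sqi_mult_bdd:
  assumes "sqi M u" "c \<in> borel_measurable M" "AE x in M. \<bar>c x\<bar> \<le> K"
  shows "sqi M (\<lambda>x. c x * u x)"
  unfolding sqi_def
proof
  show "(\<lambda>x. c x * u x) \<in> borel_measurable M" using assms unfolding sqi_def by (auto intro: borel_measurable_times)
  show "integrable M (\<lambda>x. (c x * u x)\<^sup>2)"
  proof (rule Bochner_Integration.integrable_bound)
    show "integrable M (\<lambda>x. K\<^sup>2 * (u x)\<^sup>2)" using assms unfolding sqi_def by simp
    show "(\<lambda>x. (c x * u x)\<^sup>2) \<in> borel_measurable M" using assms unfolding sqi_def by (auto intro: borel_measurable_times borel_measurable_power)
    show "AE x in M. norm ((c x * u x)\<^sup>2) \<le> norm (K\<^sup>2 * (u x)\<^sup>2)"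
      using assms(3)
    proof eventually_elim
      case (elim x)
      have "\<bar>c x\<bar> \<le> \<bar>K\<bar>" using elim abs_ge_self[of K] by linarith
      then have "(c x)\<^sup>2 \<le> K\<^sup>2" using abs_le_square_iff[of "c x" K] by simp
      then have "(c x)\<^sup>2 * (u x)\<^sup>2 \<le> K\<^sup>2 * (u x)\<^sup>2" by (rule mult_right_mono) simp
      then show ?case by (simp add: power_mult_distrib)
    qed
  qed
qed

lemma sqi_CS:
  assumes "sqi M u" "sqi M v" "t > 0"
  shows "\<bar>integral\<^sup>L M (\<lambda>x. u x * v x)\<bar> \<le>
         (t * integral\<^sup>L M (\<lambda>x. (u x)\<^sup>2) + integral\<^sup>L M (\<lambda>x. (v x)\<^sup>2) / t) / 2"
proof -
  have iu: "integrable M (\<lambda>x. (u x)\<^sup>2)" and iv: "integrable M (\<lambda>x. (v x)\<^sup>2)"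
    using assms unfolding sqi_def by auto
  have "\<bar>integral\<^sup>L M (\<lambda>x. u x * v x)\<bar> \<le> integral\<^sup>L M (\<lambda>x. \<bar>u x * v x\<bar>)"
    using integral_norm_bound[of M "\<lambda>x. u x * v x"] by simp
  also have "\<dots> \<le> integral\<^sup>L M (\<lambda>x. (t * (u x)\<^sup>2 + (v x)\<^sup>2 / t) / 2)"
  proof (rule integral_mono)
    show "integrable M (\<lambda>x. \<bar>u x * v x\<bar>)" using sqi_int_mult[OF assms(1,2)] by simp
    show "integrable M (\<lambda>x. (t * (u x)\<^sup>2 + (v x)\<^sup>2 / t) / 2)" using iu iv by simp
    show "\<bar>u x * v x\<bar> \<le> (t * (u x)\<^sup>2 + (v x)\<^sup>2 / t) / 2" for x
      using abs_mult_le_sq_t[OF assms(3), of "u x" "v x"] by simp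
  qed
  also have "\<dots> = (t * integral\<^sup>L M (\<lambda>x. (u x)\<^sup>2) + integral\<^sup>L M (\<lambda>x. (v x)\<^sup>2) / t) / 2"
    using iu iv by simp
  finally show ?thesis .
qed

lemma sqi_lim:
  assumes u: "sqi M u" and sk: "\<And>k. sqi M (s k)" and s: "sqi M s0"
    and lim: "(\<lambda>k. integral\<^sup>L M (\<lambda>x. (s k x - s0 x)\<^sup>2)) \<longlonglongrightarrow> 0"
  shows "(\<lambda>k. integral\<^sup>L M (\<lambda>x. u x * s k x)) \<longlonglongrightarrow> integral\<^sup>L M (\<lambda>x. u x * s0 x)"
proof (rule LIMSEQ_I)
  fix r :: real assume r: "0 < r"
  define A where "A = integral\<^sup>L M (\<lambda>x. (u x)\<^sup>2)"
  have A0: "0 \<le> A" unfolding A_def by (rule integral_nonneg_AE) simp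
  define t where "t = r / (A + 1)"
  have t0: "t > 0" using r A0 unfolding t_def by simp
  have tA: "t * A < r"
  proof -
    have "t * A = r * (A / (A + 1))" unfolding t_def by simp
    also have "\<dots> < r * 1" using r A0 by (intro mult_strict_left_mono) simp_all
    finally show ?thesis by simp
  qed
  from LIMSEQ_D[OF lim, of "r * t"] r t0 obtain N where
    N: "\<And>k. k \<ge> N \<Longrightarrow> norm (integral\<^sup>L M (\<lambda>x. (s k x - s0 x)\<^sup>2) - 0) < r * t" by auto
  show "\<exists>N. \<forall>k\<ge>N. norm (integral\<^sup>L M (\<lambda>x. u x * s k x) - integral\<^sup>L M (\<lambda>x. u x * s0 x)) < r"
  proof (intro exI allI impI)
    fix k assume k: "k \<ge> N"
    have d: "sqi M (\<lambda>x. s k x - s0 x)" using sk s by (rule sqi_diff)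
    have "integral\<^sup>L M (\<lambda>x. u x * s k x) - integral\<^sup>L M (\<lambda>x. u x * s0 x)
        = integral\<^sup>L M (\<lambda>x. u x * (s k x - s0 x))"
      using sqi_int_mult[OF u sk[of k]] sqi_int_mult[OF u s] by (simp add: right_diff_distrib)
    moreover have "\<bar>integral\<^sup>L M (\<lambda>x. u x * (s k x - s0 x))\<bar>
        \<le> (t * A + integral\<^sup>L M (\<lambda>x. (s k x - s0 x)\<^sup>2) / t) / 2"
      using sqi_CS[OF u d t0] unfolding A_def .
    moreover have "integral\<^sup>L M (\<lambda>x. (s k x - s0 x)\<^sup>2) / t < r"
      using N[OF k] t0 by (simp add: divide_less_eq)
    ultimately show "norm (integral\<^sup>L M (\<lambda>x. u x * s k x) - integral\<^sup>L M (\<lambda>x. u x * s0 x)) < r"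
      using tA by simp
  qed
qed

lemma g_props:
  fixes h H \<psi> g :: "real \<Rightarrow> real" and \<sigma> L :: real
  assumes "\<sigma> > 0"
    and hc: "continuous_on {0..<\<sigma>} h"
    and h0: "\<forall>s\<in>{0..<\<sigma>}. h s \<ge> 0"
    and H_def: "\<forall>s. H s = integral {0..s} h"
    and \<psi>_def: "\<forall>s. \<psi> s = integral {0..s} (\<lambda>t. exp (- H t))"
    and L_def: "L = \<psi> \<sigma>"
    and g_def: "\<forall>s. g s = (if s < L then exp (- H (the_inv_into {0..<\<sigma>} \<psi> s)) else 0)"
  shows "\<forall>s. 0 \<le> g s" "\<forall>s\<in>{0..L}. g s \<le> 1" "0 \<le> L"
    "\<forall>s1 s2. 0 \<le> s1 \<longrightarrow> s1 \<le> s2 \<longrightarrow> s2 \<le> L \<longrightarrow> g s2 \<le> g s1"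
    "g \<in> borel_measurable borel"
proof -
  show "\<forall>s. 0 \<le> g s" using g_def by simp
  show "0 \<le> L"
  proof (cases "(\<lambda>t. exp (- H t)) integrable_on {0..\<sigma>}")
    case True
    then show ?thesis unfolding L_def using \<psi>_def by (simp add: integral_nonneg)
  next
    case False
    then show ?thesis unfolding L_def using \<psi>_def by (simp add: not_integrable_integral)
  qed
  have hint: "h integrable_on {0..b}" if "b < \<sigma>" for b
    by (rule integrable_continuous_interval, rule continuous_on_subset[OF hc]) (use that in auto)
  have Hmono: "H t1 \<le> H t2" if "0 \<le> t1" "t1 \<le> t2" "t2 < \<sigma>" for t1 t2
  proof -
    have i: "h integrable_on {0..t2}" using hint that by simp
    have "integral {0..t1} h + integral {t1..t2} h = integral {0..t2} h"
      by (rule Henstock_Kurzweil_Integration.integral_combine) (use that i in auto)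
    moreover have "0 \<le> integral {t1..t2} h"
    proof (rule integral_nonneg)
      show "h integrable_on {t1..t2}" by (rule integrable_subinterval_real[OF i]) (use that in auto)
      show "\<And>x. x \<in> {t1..t2} \<Longrightarrow> 0 \<le> h x" using h0 that by auto
    qed
    ultimately show ?thesis using H_def by simp
  qed
  have H0: "0 \<le> H t" if "0 \<le> t" "t < \<sigma>" for t
    using Hmono[of 0 t] that H_def by simp
  have Hcont: "continuous_on {0..b} H" if "b < \<sigma>" for b
  proof -
    have "continuous_on {0..b} (\<lambda>x. integral {0..x} h)"
      by (rule indefinite_integral_continuous_1[OF hint[OF that]])
    moreover have "H = (\<lambda>x. integral {0..x} h)" using H_def by auto
    ultimately show ?thesis by simp
  qed
  have eint: "(\<lambda>t. exp (- H t)) integrable_on {0..b}" if "b < \<sigma>" for b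
    by (rule integrable_continuous_interval) (intro continuous_intros Hcont that)
  have \<psi>strict: "\<psi> t1 < \<psi> t2" if "0 \<le> t1" "t1 < t2" "t2 < \<sigma>" for t1 t2
  proof -
    have i: "(\<lambda>t. exp (- H t)) integrable_on {0..t2}" using eint that by simp
    have i2: "(\<lambda>t. exp (- H t)) integrable_on {t1..t2}"
      by (rule integrable_subinterval_real[OF i]) (use that in auto)
    have c: "integral {0..t1} (\<lambda>t. exp (- H t)) + integral {t1..t2} (\<lambda>t. exp (- H t))
          = integral {0..t2} (\<lambda>t. exp (- H t))"
      by (rule Henstock_Kurzweil_Integration.integral_combine) (use that i in auto)
    have "integral {t1..t2} (\<lambda>t. exp (- H t2)) \<le> integral {t1..t2} (\<lambda>t. exp (- H t))"
    proof (rule integral_le)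
      show "(\<lambda>t. exp (- H t2)) integrable_on {t1..t2}" by (rule integrable_const_ivl)
      show "(\<lambda>t. exp (- H t)) integrable_on {t1..t2}" by (rule i2)
      show "exp (- H t2) \<le> exp (- H x)" if "x \<in> {t1..t2}" for x
        using Hmono[of x t2] that \<open>0 \<le> t1\<close> \<open>t2 < \<sigma>\<close> by auto
    qed
    moreover have "integral {t1..t2} (\<lambda>t. exp (- H t2)) = (t2 - t1) * exp (- H t2)"
      using that by simp
    moreover have "0 < (t2 - t1) * exp (- H t2)" using that by simp
    ultimately show ?thesis using c \<psi>_def by simp
  qed
  have inj: "inj_on \<psi> {0..<\<sigma>}"
  proof (rule inj_onI)
    fix x y assume "x \<in> {0..<\<sigma>}" "y \<in> {0..<\<sigma>}" "\<psi> x = \<psi> y"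
    then show "x = y" using \<psi>strict[of x y] \<psi>strict[of y x] by (cases x y rule: linorder_cases) auto
  qed
  have range: "s \<in> \<psi> ` {0..<\<sigma>}" if sL: "0 \<le> s" "s < L" for s
  proof (cases "(\<lambda>t. exp (- H t)) integrable_on {0..\<sigma>}")
    case True
    have "continuous_on {0..\<sigma>} (\<lambda>x. integral {0..x} (\<lambda>t. exp (- H t)))"
      by (rule indefinite_integral_continuous_1[OF True])
    moreover have "\<psi> = (\<lambda>x. integral {0..x} (\<lambda>t. exp (- H t)))" using \<psi>_def by auto
    ultimately have "continuous_on {0..\<sigma>} \<psi>" by simp
    moreover have "\<psi> 0 = 0" using \<psi>_def by simp
    ultimately obtain t where t: "0 \<le> t" "t \<le> \<sigma>" "\<psi> t = s"
      using IVT'[of \<psi> 0 s \<sigma>] sL L_def \<open>\<sigma> > 0\<close> by auto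
    then have "t \<noteq> \<sigma>" using sL L_def by auto
    then show ?thesis using t by force
  next
    case False
    then have "L = 0" using L_def \<psi>_def by (simp add: not_integrable_integral)
    then show ?thesis using sL by simp
  qed
  define T where "T s = the_inv_into {0..<\<sigma>} \<psi> s" for s
  have T: "T s \<in> {0..<\<sigma>}" "\<psi> (T s) = s" if "0 \<le> s" "s < L" for s
    using the_inv_into_into[OF inj range[OF that], of "{0..<\<sigma>}"] f_the_inv_into_f[OF inj range[OF that]]
    unfolding T_def by auto
  show "\<forall>s\<in>{0..L}. g s \<le> 1"
  proof
    fix s assume s: "s \<in> {0..L}"
    show "g s \<le> 1"
    proof (cases "s < L")
      case True
      then have "0 \<le> H (T s)" using T[of s] s H0 by auto
      then show ?thesis using g_def True unfolding T_def by simp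
    next
      case False then show ?thesis using g_def by simp
    qed
  qed
  show "\<forall>s1 s2. 0 \<le> s1 \<longrightarrow> s1 \<le> s2 \<longrightarrow> s2 \<le> L \<longrightarrow> g s2 \<le> g s1"
  proof (intro allI impI)
    fix s1 s2 assume s: "0 \<le> s1" "s1 \<le> s2" "s2 \<le> L"
    show "g s2 \<le> g s1"
    proof (cases "s2 < L")
      case True
      have t1: "T s1 \<in> {0..<\<sigma>}" "\<psi> (T s1) = s1" using T[of s1] s True by auto
      have t2: "T s2 \<in> {0..<\<sigma>}" "\<psi> (T s2) = s2" using T[of s2] s True by auto
      have "T s1 \<le> T s2"
      proof (rule ccontr)
        assume "\<not> T s1 \<le> T s2"
        then have "\<psi> (T s2) < \<psi> (T s1)" using \<psi>strict[of "T s2" "T s1"] t1 t2 by auto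
        then show False using t1 t2 s by simp
      qed
      then have "H (T s1) \<le> H (T s2)" using Hmono t1 t2 by auto
      then show ?thesis using g_def True s unfolding T_def by simp
    next
      case False
      then show ?thesis using g_def by simp
    qed
  qed
  have L0: "0 \<le> L"
  proof (cases "(\<lambda>t. exp (- H t)) integrable_on {0..\<sigma>}")
    case True
    then show ?thesis unfolding L_def using \<psi>_def by (simp add: integral_nonneg)
  next
    case False
    then show ?thesis unfolding L_def using \<psi>_def by (simp add: not_integrable_integral)
  qed
  have mono_g: "g s2 \<le> g s1" if "0 \<le> s1" "s1 \<le> s2" "s2 \<le> L" for s1 s2
  proof (cases "s2 < L")
    case True
    have t1: "T s1 \<in> {0..<\<sigma>}" "\<psi> (T s1) = s1" using T[of s1] that True by auto
    have t2: "T s2 \<in> {0..<\<sigma>}" "\<psi> (T s2) = s2" using T[of s2] that True by auto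
    have "T s1 \<le> T s2"
    proof (rule ccontr)
      assume "\<not> T s1 \<le> T s2"
      then have "\<psi> (T s2) < \<psi> (T s1)" using \<psi>strict[of "T s2" "T s1"] t1 t2 by auto
      then show False using t1 t2 that by simp
    qed
    then have "H (T s1) \<le> H (T s2)" using Hmono t1 t2 by auto
    then show ?thesis using g_def True that unfolding T_def by simp
  next
    case False
    then show ?thesis using g_def by simp
  qed
  define gc where "gc s = g (max 0 (min L s))" for s
  have "mono (\<lambda>s. - gc s)"
  proof (rule monoI)
    fix x y :: real assume "x \<le> y"
    then show "- gc x \<le> - gc y" unfolding gc_def using mono_g[of "max 0 (min L x)" "max 0 (min L y)"] L0 by simp
  qed
  then have "(\<lambda>s. - gc s) \<in> borel_measurable borel" by (rule borel_measurable_mono)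
  then have gcm: "gc \<in> borel_measurable borel" using borel_measurable_uminus[of "\<lambda>s. - gc s" borel] by simp
  have \<psi>nn: "0 \<le> \<psi> t" if "t \<in> {0..<\<sigma>}" for t
  proof (cases "t = 0")
    case True then show ?thesis using \<psi>_def by simp
  next
    case False then have "\<psi> 0 < \<psi> t" using \<psi>strict[of 0 t] that by auto
    moreover have "\<psi> 0 = 0" using \<psi>_def by simp
    ultimately show ?thesis by simp
  qed
  define c where "c = exp (- H (The (\<lambda>x. False)))"
  have "g s = (if s < 0 then c else gc s)" for s
  proof (cases "s < 0")
    case True
    have "(\<lambda>x. x \<in> {0..<\<sigma>} \<and> \<psi> x = s) = (\<lambda>x. False)" using \<psi>nn True by force
    then have "the_inv_into {0..<\<sigma>} \<psi> s = The (\<lambda>x. False)" unfolding the_inv_into_def by simp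
    then show ?thesis using True L0 g_def unfolding c_def by simp
  next
    case False
    show ?thesis
    proof (cases "s \<le> L")
      case True then show ?thesis using False unfolding gc_def by simp
    next
      case False': False
      then have "g s = 0" using g_def by simp
      moreover have "gc s = g L" unfolding gc_def using False' L0 by simp
      moreover have "g L = 0" using g_def by simp
      ultimately show ?thesis using False by simp
    qed
  qed
  then have "g = (\<lambda>s. if s < 0 then c else gc s)" by auto
  moreover have "(\<lambda>s. if s < 0 then c else gc s) \<in> borel_measurable borel"
    using gcm by measurable
  ultimately show "g \<in> borel_measurable borel" by simp
qed

lemma cont_bounded_on:
  fixes F :: "real \<Rightarrow> real"
  assumes "continuous_on UNIV F"
  obtains K where "K \<ge> 0" "\<And>t. t \<in> {0..c} \<Longrightarrow> \<bar>F t\<bar> \<le> K"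
proof -
  have "compact (F ` {0..c})"
    by (rule compact_continuous_image[OF continuous_on_subset[OF assms subset_UNIV]]) simp
  then have "bounded (F ` {0..c})" by (rule compact_imp_bounded)
  then obtain K where K: "\<forall>y\<in>F ` {0..c}. norm y \<le> K" unfolding bounded_iff by blast
  have "\<bar>F t\<bar> \<le> max K 0" if "t \<in> {0..c}" for t
  proof -
    have "F t \<in> F ` {0..c}" using that by (rule imageI)
    then have "norm (F t) \<le> K" using K by blast
    then show ?thesis by simp
  qed
  then show ?thesis using that[of "max K 0"] by simp
qed

locale sob =
  fixes \<Omega> :: "(real^'n::finite) set" and a :: "real^'n \<Rightarrow> real" and P :: "real^'n \<Rightarrow> real^'n"
    and \<phi>s :: "nat \<Rightarrow> real^'n \<Rightarrow> real" and Lb :: real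
  assumes fm: "finite_measure (lebesgue_on \<Omega>)"
    and a_meas: "a \<in> borel_measurable (lebesgue_on \<Omega>)"
    and a_bd: "AE x in lebesgue_on \<Omega>. 0 \<le> a x \<and> a x \<le> Lb"
    and P_sqi: "\<And>i. sqi (lebesgue_on \<Omega>) (\<lambda>x. P x $ i)"
    and a_weak: "\<And>\<eta> i. test_fn \<Omega> \<eta> \<Longrightarrow>
       (LINT x|lebesgue_on \<Omega>. a x * pd i \<eta> x) = - (LINT x|lebesgue_on \<Omega>. P x $ i * \<eta> x)"
    and \<phi>_test: "\<And>k. test_fn \<Omega> (\<phi>s k)"
    and \<phi>_lim: "(\<lambda>k. LINT x|lebesgue_on \<Omega>. (\<phi>s k x - a x)\<^sup>2) \<longlonglongrightarrow> 0"
    and d\<phi>_lim: "\<And>i. (\<lambda>k. LINT x|lebesgue_on \<Omega>. (pd i (\<phi>s k) x - P x $ i)\<^sup>2) \<longlonglongrightarrow> 0"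
begin

abbreviation LM where "LM \<equiv> lebesgue_on \<Omega>"

lemma test_sqi: "test_fn \<Omega> \<eta> \<Longrightarrow> sqi LM \<eta>"
proof -
  assume t: "test_fn \<Omega> \<eta>"
  obtain K where "K \<ge> 0" "\<And>x. \<bar>\<eta> x\<bar> \<le> K" using test_fn_bounded[OF t] by blast
  then show "sqi LM \<eta>" by (intro sqi_bdd[OF fm test_fn_meas[OF t]]) auto
qed


lemma a_sqi: "sqi LM a"
  by (rule sqi_bdd[OF fm a_meas, of "\<bar>Lb\<bar>"]) (use a_bd in \<open>eventually_elim, auto\<close>)

lemma \<phi>_sqi: "sqi LM (\<phi>s k)" by (rule test_sqi[OF \<phi>_test])
lemma d\<phi>_sqi: "sqi LM (pd i (\<phi>s k))" by (rule test_sqi[OF test_fn_pd[OF \<phi>_test]])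
lemma \<phi>_smooth: "smooth (\<phi>s k)" using \<phi>_test[of k] unfolding test_fn_def by blast

lemma F_meas: fixes F :: "real \<Rightarrow> real" shows "continuous_on UNIV F \<Longrightarrow> (\<lambda>x. F (a x)) \<in> borel_measurable LM"
  by (rule measurable_compose[OF a_meas borel_measurable_continuous_onI])

lemma F_bdd:
  fixes F :: "real \<Rightarrow> real"
  assumes "continuous_on UNIV F"
  obtains K where "AE x in LM. \<bar>F (a x)\<bar> \<le> K"
proof -
  obtain K where K: "\<And>t. t \<in> {0..Lb} \<Longrightarrow> \<bar>F t\<bar> \<le> K" using cont_bounded_on[OF assms] by blast
  have "AE x in LM. \<bar>F (a x)\<bar> \<le> K" using a_bd by eventually_elim (simp add: K)
  then show ?thesis using that by blast
qed

lemma sqi_F: fixes F :: "real \<Rightarrow> real" shows "continuous_on UNIV F \<Longrightarrow> sqi LM u \<Longrightarrow> sqi LM (\<lambda>x. F (a x) * u x)"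
proof -
  assume c: "continuous_on UNIV F" and u: "sqi LM u"
  obtain K where "AE x in LM. \<bar>F (a x)\<bar> \<le> K" using F_bdd[OF c] by blast
  then show ?thesis by (rule sqi_mult_bdd[OF u F_meas[OF c]])
qed

lemma sqi_test_mult: "test_fn \<Omega> \<eta> \<Longrightarrow> sqi LM u \<Longrightarrow> sqi LM (\<lambda>x. \<eta> x * u x)"
proof -
  assume t: "test_fn \<Omega> \<eta>" and u: "sqi LM u"
  obtain K where "K \<ge> 0" "\<And>x. \<bar>\<eta> x\<bar> \<le> K" using test_fn_bounded[OF t] by blast
  then have "AE x in LM. \<bar>\<eta> x\<bar> \<le> K" by simp
  then show ?thesis by (rule sqi_mult_bdd[OF u test_fn_meas[OF t]])
qed

lemma lim_a: "sqi LM u \<Longrightarrow> (\<lambda>k. LINT x|LM. u x * \<phi>s k x) \<longlonglongrightarrow> (LINT x|LM. u x * a x)"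
  by (rule sqi_lim[OF _ \<phi>_sqi a_sqi \<phi>_lim])

lemma lim_P: "sqi LM u \<Longrightarrow> (\<lambda>k. LINT x|LM. u x * pd i (\<phi>s k) x) \<longlonglongrightarrow> (LINT x|LM. u x * P x $ i)"
  by (rule sqi_lim[OF _ d\<phi>_sqi P_sqi d\<phi>_lim])

lemma pd_\<phi>_mult:
  assumes "test_fn \<Omega> \<eta>"
  shows "pd i (\<lambda>x. \<phi>s k x * \<eta> x) x = \<phi>s k x * pd i \<eta> x + pd i (\<phi>s k) x * \<eta> x"
proof -
  have "smooth \<eta>" using assms unfolding test_fn_def by blast
  then show ?thesis by (intro pd_mult smooth_diff \<phi>_smooth)
qed

lemma test_\<phi>_mult: "test_fn \<Omega> \<eta> \<Longrightarrow> test_fn \<Omega> (\<lambda>x. \<phi>s k x * \<eta> x)"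
  by (rule test_fn_mult[OF _ \<phi>_smooth])

end

context sob begin

lemma chain_step:
  fixes F F' :: "real \<Rightarrow> real"
  assumes Fc: "continuous_on UNIV F" and F'c: "continuous_on UNIV F'"
    and C: "\<And>\<eta>. test_fn \<Omega> \<eta> \<Longrightarrow>
       (LINT x|LM. F (a x) * pd i \<eta> x) = - (LINT x|LM. F' (a x) * P x $ i * \<eta> x)"
    and \<eta>: "test_fn \<Omega> \<eta>"
  shows "(LINT x|LM. a x * F (a x) * pd i \<eta> x) = - (LINT x|LM. (F (a x) + a x * F' (a x)) * P x $ i * \<eta> x)"
proof -
  have s1: "sqi LM (\<lambda>x. F (a x) * pd i \<eta> x)" by (rule sqi_F[OF Fc test_sqi[OF test_fn_pd[OF \<eta>]]])
  have s2: "sqi LM (\<lambda>x. F' (a x) * (\<eta> x * P x $ i))" by (rule sqi_F[OF F'c sqi_test_mult[OF \<eta> P_sqi]])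
  have s3: "sqi LM (\<lambda>x. F (a x) * \<eta> x)" by (rule sqi_F[OF Fc test_sqi[OF \<eta>]])
  have l1: "(\<lambda>k. LINT x|LM. F (a x) * pd i \<eta> x * \<phi>s k x) \<longlonglongrightarrow> (LINT x|LM. F (a x) * pd i \<eta> x * a x)"
    by (rule lim_a[OF s1])
  have e: "(LINT x|LM. F (a x) * pd i \<eta> x * \<phi>s k x) =
      - (LINT x|LM. F' (a x) * (\<eta> x * P x $ i) * \<phi>s k x) - (LINT x|LM. F (a x) * \<eta> x * pd i (\<phi>s k) x)" for k
  proof -
    have t: "test_fn \<Omega> (\<lambda>x. \<phi>s k x * \<eta> x)" by (rule test_\<phi>_mult[OF \<eta>])
    have i1: "integrable LM (\<lambda>x. F (a x) * pd i \<eta> x * \<phi>s k x)" by (rule sqi_int_mult[OF s1 \<phi>_sqi])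
    have i2: "integrable LM (\<lambda>x. F (a x) * \<eta> x * pd i (\<phi>s k) x)" by (rule sqi_int_mult[OF s3 d\<phi>_sqi])
    have "(LINT x|LM. F (a x) * pd i (\<lambda>x. \<phi>s k x * \<eta> x) x)
        = (LINT x|LM. F (a x) * pd i \<eta> x * \<phi>s k x + F (a x) * \<eta> x * pd i (\<phi>s k) x)"
      apply (rule Bochner_Integration.integral_cong[OF refl])
      apply (simp only: pd_\<phi>_mult[OF \<eta>])
      apply (simp add: algebra_simps)
      done
    also have "\<dots> = (LINT x|LM. F (a x) * pd i \<eta> x * \<phi>s k x) + (LINT x|LM. F (a x) * \<eta> x * pd i (\<phi>s k) x)"
      by (rule Bochner_Integration.integral_add[OF i1 i2])
    finally have A: "(LINT x|LM. F (a x) * pd i (\<lambda>x. \<phi>s k x * \<eta> x) x)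
        = (LINT x|LM. F (a x) * pd i \<eta> x * \<phi>s k x) + (LINT x|LM. F (a x) * \<eta> x * pd i (\<phi>s k) x)" .
    have B: "(LINT x|LM. F' (a x) * P x $ i * (\<phi>s k x * \<eta> x)) = (LINT x|LM. F' (a x) * (\<eta> x * P x $ i) * \<phi>s k x)"
      by (rule Bochner_Integration.integral_cong[OF refl]) (simp add: algebra_simps)
    show ?thesis using C[OF t] A B by linarith
  qed
  have l2: "(\<lambda>k. - (LINT x|LM. F' (a x) * (\<eta> x * P x $ i) * \<phi>s k x) - (LINT x|LM. F (a x) * \<eta> x * pd i (\<phi>s k) x))
      \<longlonglongrightarrow> - (LINT x|LM. F' (a x) * (\<eta> x * P x $ i) * a x) - (LINT x|LM. F (a x) * \<eta> x * P x $ i)"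
    by (intro tendsto_diff tendsto_minus lim_a[OF s2] lim_P[OF s3])
  have eq: "(LINT x|LM. F (a x) * pd i \<eta> x * a x) =
     - (LINT x|LM. F' (a x) * (\<eta> x * P x $ i) * a x) - (LINT x|LM. F (a x) * \<eta> x * P x $ i)"
    using LIMSEQ_unique[OF l1 l2[folded e]] .
  have i3: "integrable LM (\<lambda>x. F' (a x) * (\<eta> x * P x $ i) * a x)" by (rule sqi_int_mult[OF s2 a_sqi])
  have i4: "integrable LM (\<lambda>x. F (a x) * \<eta> x * P x $ i)" by (rule sqi_int_mult[OF s3 P_sqi])
  have "(LINT x|LM. (F (a x) + a x * F' (a x)) * P x $ i * \<eta> x)
      = (LINT x|LM. F (a x) * \<eta> x * P x $ i + F' (a x) * (\<eta> x * P x $ i) * a x)"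
    by (rule Bochner_Integration.integral_cong[OF refl]) (simp add: algebra_simps)
  also have "\<dots> = (LINT x|LM. F (a x) * \<eta> x * P x $ i) + (LINT x|LM. F' (a x) * (\<eta> x * P x $ i) * a x)"
    by (rule Bochner_Integration.integral_add[OF i4 i3])
  finally have R: "(LINT x|LM. (F (a x) + a x * F' (a x)) * P x $ i * \<eta> x)
      = (LINT x|LM. F (a x) * \<eta> x * P x $ i) + (LINT x|LM. F' (a x) * (\<eta> x * P x $ i) * a x)" .
  have L: "(LINT x|LM. a x * F (a x) * pd i \<eta> x) = (LINT x|LM. F (a x) * pd i \<eta> x * a x)"
    by (rule Bochner_Integration.integral_cong[OF refl]) (simp add: algebra_simps)
  show ?thesis using eq R L by linarith
qed


lemma int_Fpd: "continuous_on UNIV F \<Longrightarrow> test_fn \<Omega> \<eta> \<Longrightarrow> integrable LM (\<lambda>x. F (a x) * pd i \<eta> x)"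
  by (rule sqi_int[OF fm sqi_F[OF _ test_sqi[OF test_fn_pd]]])

lemma int_FP\<eta>:
  assumes "continuous_on UNIV F" "test_fn \<Omega> \<eta>"
  shows "integrable LM (\<lambda>x. F (a x) * P x $ i * \<eta> x)"
proof -
  have "integrable LM (\<lambda>x. F (a x) * (\<eta> x * P x $ i))"
    by (rule sqi_int[OF fm sqi_F[OF assms(1) sqi_test_mult[OF assms(2) P_sqi]]])
  moreover have "(\<lambda>x. F (a x) * (\<eta> x * P x $ i)) = (\<lambda>x. F (a x) * P x $ i * \<eta> x)"
    by (simp add: fun_eq_iff)
  ultimately show ?thesis by simp
qed

definition CC :: "'n \<Rightarrow> (real \<Rightarrow> real) \<Rightarrow> (real \<Rightarrow> real) \<Rightarrow> bool" where
  "CC i F F' \<longleftrightarrow> continuous_on UNIV F \<and> continuous_on UNIV F' \<and>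
     (\<forall>\<eta>. test_fn \<Omega> \<eta> \<longrightarrow> (LINT x|LM. F (a x) * pd i \<eta> x) = - (LINT x|LM. F' (a x) * P x $ i * \<eta> x))"

lemma CC_id: "CC i (\<lambda>t. t) (\<lambda>t. 1)"
  unfolding CC_def using a_weak by (simp add: continuous_on_id)

lemma CC_zero: "CC i (\<lambda>t. 0) (\<lambda>t. 0)"
  unfolding CC_def by simp

lemma CC_mult: "CC i F F' \<Longrightarrow> CC i (\<lambda>t. t * F t) (\<lambda>t. F t + t * F' t)"
  unfolding CC_def
proof (elim conjE, intro conjI allI impI)
  assume c: "continuous_on UNIV F" "continuous_on UNIV F'"
    and C: "\<forall>\<eta>. test_fn \<Omega> \<eta> \<longrightarrow> (LINT x|LM. F (a x) * pd i \<eta> x) = - (LINT x|LM. F' (a x) * P x $ i * \<eta> x)"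
  show "continuous_on UNIV (\<lambda>t. t * F t)" using c by (intro continuous_intros)
  show "continuous_on UNIV (\<lambda>t. F t + t * F' t)" using c by (intro continuous_intros)
  fix \<eta> assume \<eta>: "test_fn \<Omega> \<eta>"
  show "(LINT x|LM. a x * F (a x) * pd i \<eta> x) = - (LINT x|LM. (F (a x) + a x * F' (a x)) * P x $ i * \<eta> x)"
    by (rule chain_step[OF c]) (use C \<eta> in auto)
qed

lemma CC_lin: "CC i F F' \<Longrightarrow> CC i G G' \<Longrightarrow> CC i (\<lambda>t. F t + c * G t) (\<lambda>t. F' t + c * G' t)"
  unfolding CC_def
proof (elim conjE, intro conjI allI impI)
  assume c: "continuous_on UNIV F" "continuous_on UNIV F'" "continuous_on UNIV G" "continuous_on UNIV G'"
    and C1: "\<forall>\<eta>. test_fn \<Omega> \<eta> \<longrightarrow> (LINT x|LM. F (a x) * pd i \<eta> x) = - (LINT x|LM. F' (a x) * P x $ i * \<eta> x)"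
    and C2: "\<forall>\<eta>. test_fn \<Omega> \<eta> \<longrightarrow> (LINT x|LM. G (a x) * pd i \<eta> x) = - (LINT x|LM. G' (a x) * P x $ i * \<eta> x)"
  show "continuous_on UNIV (\<lambda>t. F t + c * G t)" using c by (intro continuous_intros)
  show "continuous_on UNIV (\<lambda>t. F' t + c * G' t)" using c by (intro continuous_intros)
  fix \<eta> assume \<eta>: "test_fn \<Omega> \<eta>"
  have "(LINT x|LM. (F (a x) + c * G (a x)) * pd i \<eta> x)
      = (LINT x|LM. F (a x) * pd i \<eta> x + c * (G (a x) * pd i \<eta> x))"
    by (rule Bochner_Integration.integral_cong[OF refl]) (simp add: algebra_simps)
  also have "\<dots> = (LINT x|LM. F (a x) * pd i \<eta> x) + c * (LINT x|LM. G (a x) * pd i \<eta> x)"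
    using int_Fpd[OF c(1) \<eta>] int_Fpd[OF c(3) \<eta>] by simp
  also have "\<dots> = - (LINT x|LM. F' (a x) * P x $ i * \<eta> x) - c * (LINT x|LM. G' (a x) * P x $ i * \<eta> x)"
    using C1 C2 \<eta> by simp
  also have "\<dots> = - ((LINT x|LM. F' (a x) * P x $ i * \<eta> x) + (LINT x|LM. c * (G' (a x) * P x $ i * \<eta> x)))"
    by simp
  also have "\<dots> = - (LINT x|LM. F' (a x) * P x $ i * \<eta> x + c * (G' (a x) * P x $ i * \<eta> x))"
    using int_FP\<eta>[OF c(2) \<eta>] int_FP\<eta>[OF c(4) \<eta>] by simp
  also have "\<dots> = - (LINT x|LM. (F' (a x) + c * G' (a x)) * P x $ i * \<eta> x)"
    by (rule arg_cong[where f=uminus], rule Bochner_Integration.integral_cong[OF refl]) (simp add: algebra_simps)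
  finally show "(LINT x|LM. (F (a x) + c * G (a x)) * pd i \<eta> x) = - (LINT x|LM. (F' (a x) + c * G' (a x)) * P x $ i * \<eta> x)" .
qed

lemma CC_cong: "CC i F F' \<Longrightarrow> (\<And>t. F t = G t) \<Longrightarrow> (\<And>t. F' t = G' t) \<Longrightarrow> CC i G G'"
proof -
  assume "CC i F F'" "\<And>t. F t = G t" "\<And>t. F' t = G' t"
  moreover have "F = G" "F' = G'" using calculation by auto
  ultimately show ?thesis by simp
qed


definition Mc :: real where "Mc = \<bar>Lb\<bar> + 1"
definition U :: "nat \<Rightarrow> real \<Rightarrow> real" where "U m t = 1 - (1 - t / Mc) ^ m"
definition U' :: "nat \<Rightarrow> real \<Rightarrow> real" where "U' m t = (real m / Mc) * (1 - t / Mc) ^ (m - 1)"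

lemma Mc_pos: "Mc > 0" unfolding Mc_def by simp

lemma U_Suc: "U (Suc m) t = U m t + (1 / Mc) * (t + (-1) * (t * U m t))"
  using Mc_pos unfolding U_def by (simp add: field_simps)

lemma U'_Suc: "U' (Suc m) t = U' m t + (1 / Mc) * (1 + (-1) * (U m t + t * U' m t))"
proof (cases m)
  case 0 then show ?thesis using Mc_pos unfolding U_def U'_def by simp
next
  case (Suc n)
  then show ?thesis using Mc_pos unfolding U_def U'_def by (simp add: field_simps)
qed

lemma CC_U: "CC i (U m) (U' m)"
proof (induction m)
  case 0
  show ?case by (rule CC_cong[OF CC_zero]) (simp_all add: U_def U'_def)
next
  case (Suc m)
  have h1: "CC i (\<lambda>t. t * U m t) (\<lambda>t. U m t + t * U' m t)" by (rule CC_mult[OF Suc.IH])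
  have h2: "CC i (\<lambda>t. t + (-1) * (t * U m t)) (\<lambda>t. 1 + (-1) * (U m t + t * U' m t))"
    by (rule CC_lin[OF CC_id h1])
  have h3: "CC i (\<lambda>t. U m t + (1 / Mc) * (t + (-1) * (t * U m t)))
      (\<lambda>t. U' m t + (1 / Mc) * (1 + (-1) * (U m t + t * U' m t)))"
    by (rule CC_lin[OF Suc.IH h2])
  show ?case by (rule CC_cong[OF h3]) (simp_all add: U_Suc U'_Suc)
qed

end

context sob begin

lemma U_bdd: "0 \<le> t \<Longrightarrow> t \<le> Lb \<Longrightarrow> \<bar>U m t\<bar> \<le> 1"
proof -
  assume t: "0 \<le> t" "t \<le> Lb"
  have "t < Mc" using t unfolding Mc_def by simp
  then have q: "0 \<le> 1 - t / Mc" "1 - t / Mc \<le> 1" using t Mc_pos by (simp_all add: field_simps)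
  then have "0 \<le> (1 - t / Mc) ^ m" "(1 - t / Mc) ^ m \<le> 1" by (simp_all add: power_le_one)
  then show ?thesis unfolding U_def by simp
qed

lemma W_bdd: "0 \<le> t \<Longrightarrow> t \<le> Lb \<Longrightarrow> \<bar>(1 - t / Mc) ^ m\<bar> \<le> 1"
proof -
  assume t: "0 \<le> t" "t \<le> Lb"
  have "t < Mc" using t unfolding Mc_def by simp
  then have q: "0 \<le> 1 - t / Mc" "1 - t / Mc \<le> 1" using t Mc_pos by (simp_all add: field_simps)
  then show ?thesis by (simp add: power_le_one)
qed

lemma W_lim: "0 \<le> t \<Longrightarrow> t \<le> Lb \<Longrightarrow> (\<lambda>m. (1 - t / Mc) ^ m) \<longlonglongrightarrow> (if t = 0 then 1 else 0)"
proof -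
  assume t: "0 \<le> t" "t \<le> Lb"
  show ?thesis
  proof (cases "t = 0")
    case True then show ?thesis by simp
  next
    case False
    have "t < Mc" using t unfolding Mc_def by simp
    then have "norm (1 - t / Mc) < 1" using t False Mc_pos by (simp add: field_simps abs_if)
    then have "(\<lambda>m. (1 - t / Mc) ^ m) \<longlonglongrightarrow> 0" by (intro LIMSEQ_power_zero)
    then show ?thesis using False by simp
  qed
qed

lemma a_meas' [measurable]: "a \<in> borel_measurable LM" by (rule a_meas)

lemma Z_meas: "(\<lambda>x. if a x = 0 then 1 else (0::real)) \<in> borel_measurable LM"
  by measurable

lemma P_meas: "(\<lambda>x. P x $ i) \<in> borel_measurable LM" using P_sqi[of i] unfolding sqi_def by blast

lemma zero_set_weak:
  assumes \<eta>: "test_fn \<Omega> \<eta>"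
  shows "(LINT x|LM. (if a x = 0 then 1 else 0) * P x $ i * \<eta> x) = 0"
proof -
  define W where "W m t = (1 - t / Mc) ^ m" for m t
  define s where "s m = (LINT x|LM. W m (a x) * P x $ i * \<eta> x)" for m
  have Wc: "continuous_on UNIV (W m)" for m unfolding W_def by (intro continuous_intros) (use Mc_pos in auto)
  have \<eta>m: "\<eta> \<in> borel_measurable LM" by (rule test_fn_meas[OF \<eta>])
  have lim1: "s \<longlonglongrightarrow> (LINT x|LM. (if a x = 0 then 1 else 0) * P x $ i * \<eta> x)"
    unfolding s_def
  proof (rule integral_dominated_convergence[where w="\<lambda>x. \<bar>P x $ i * \<eta> x\<bar>"])
    show "(\<lambda>x. (if a x = 0 then 1 else 0) * P x $ i * \<eta> x) \<in> borel_measurable LM"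
      using Z_meas P_meas \<eta>m by (intro borel_measurable_times)
    show "(\<lambda>x. W m (a x) * P x $ i * \<eta> x) \<in> borel_measurable LM" for m
      using F_meas[OF Wc] P_meas \<eta>m by (intro borel_measurable_times)
    show "integrable LM (\<lambda>x. \<bar>P x $ i * \<eta> x\<bar>)"
      using sqi_int[OF fm sqi_test_mult[OF \<eta> P_sqi]] by (simp add: mult.commute)
    show "AE x in LM. (\<lambda>m. W m (a x) * P x $ i * \<eta> x) \<longlonglongrightarrow> (if a x = 0 then 1 else 0) * P x $ i * \<eta> x"
      using a_bd
    proof eventually_elim
      case (elim x)
      have "(\<lambda>m. W m (a x)) \<longlonglongrightarrow> (if a x = 0 then 1 else 0)" unfolding W_def using W_lim elim by simp
      then show ?case by (intro tendsto_mult_right)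
    qed
    show "AE x in LM. norm (W m (a x) * P x $ i * \<eta> x) \<le> \<bar>P x $ i * \<eta> x\<bar>" for m
      using a_bd
    proof eventually_elim
      case (elim x)
      have "\<bar>W m (a x)\<bar> \<le> 1" unfolding W_def using W_bdd elim by simp
      then have "\<bar>W m (a x)\<bar> * \<bar>P x $ i * \<eta> x\<bar> \<le> 1 * \<bar>P x $ i * \<eta> x\<bar>" by (rule mult_right_mono) simp
      then show ?case by (simp add: abs_mult mult.assoc)
    qed
  qed
  define C\<eta> where "C\<eta> = (LINT x|LM. \<bar>pd i \<eta> x\<bar>)"
  have bnd: "norm (s m) \<le> (Mc * C\<eta>) * inverse (real (Suc m))" for m
  proof -
    have CC: "CC i (U (Suc m)) (U' (Suc m))" by (rule CC_U)
    then have Uc: "continuous_on UNIV (U (Suc m))" unfolding CC_def by blast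
    have eq: "(LINT x|LM. U (Suc m) (a x) * pd i \<eta> x) = - (LINT x|LM. U' (Suc m) (a x) * P x $ i * \<eta> x)"
      using CC \<eta> unfolding CC_def by blast
    have "(LINT x|LM. U' (Suc m) (a x) * P x $ i * \<eta> x) = (LINT x|LM. (real (Suc m) / Mc) * (W m (a x) * P x $ i * \<eta> x))"
      by (rule Bochner_Integration.integral_cong[OF refl]) (simp add: U'_def W_def)
    also have "\<dots> = (real (Suc m) / Mc) * s m" unfolding s_def by simp
    finally have e1: "(real (Suc m) / Mc) * s m = - (LINT x|LM. U (Suc m) (a x) * pd i \<eta> x)"
      using eq by simp
    have e2: "s m = - (LINT x|LM. U (Suc m) (a x) * pd i \<eta> x) * (Mc / real (Suc m))"
    proof -
      have "s m = ((Mc / real (Suc m)) * (real (Suc m) / Mc)) * s m" using Mc_pos by simp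
      also have "\<dots> = (Mc / real (Suc m)) * ((real (Suc m) / Mc) * s m)" by (simp only: mult.assoc)
      also have "\<dots> = (Mc / real (Suc m)) * (- (LINT x|LM. U (Suc m) (a x) * pd i \<eta> x))" by (simp only: e1)
      also have "\<dots> = - (LINT x|LM. U (Suc m) (a x) * pd i \<eta> x) * (Mc / real (Suc m))" by (rule mult.commute)
      finally show ?thesis .
    qed
    have "\<bar>LINT x|LM. U (Suc m) (a x) * pd i \<eta> x\<bar> \<le> (LINT x|LM. \<bar>U (Suc m) (a x) * pd i \<eta> x\<bar>)"
      using integral_norm_bound[of LM "\<lambda>x. U (Suc m) (a x) * pd i \<eta> x"] by simp
    also have "\<dots> \<le> C\<eta>" unfolding C\<eta>_def
    proof (rule integral_mono_AE)
      show "integrable LM (\<lambda>x. \<bar>U (Suc m) (a x) * pd i \<eta> x\<bar>)" using int_Fpd[OF Uc \<eta>] by simp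
      show "integrable LM (\<lambda>x. \<bar>pd i \<eta> x\<bar>)" using sqi_int[OF fm test_sqi[OF test_fn_pd[OF \<eta>]]] by simp
      show "AE x in LM. \<bar>U (Suc m) (a x) * pd i \<eta> x\<bar> \<le> \<bar>pd i \<eta> x\<bar>"
        using a_bd
      proof eventually_elim
        case (elim x)
        have "\<bar>U (Suc m) (a x)\<bar> \<le> 1" using U_bdd elim by simp
        then have "\<bar>U (Suc m) (a x)\<bar> * \<bar>pd i \<eta> x\<bar> \<le> 1 * \<bar>pd i \<eta> x\<bar>" by (rule mult_right_mono) simp
        then show ?case by (simp add: abs_mult)
      qed
    qed
    finally have "\<bar>LINT x|LM. U (Suc m) (a x) * pd i \<eta> x\<bar> \<le> C\<eta>" .
    then have le: "\<bar>LINT x|LM. U (Suc m) (a x) * pd i \<eta> x\<bar> * (Mc / real (Suc m)) \<le> C\<eta> * (Mc / real (Suc m))"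
      using Mc_pos by (intro mult_right_mono) simp_all
    have "norm (s m) = \<bar>LINT x|LM. U (Suc m) (a x) * pd i \<eta> x\<bar> * (Mc / real (Suc m))"
      using e2 Mc_pos by (simp add: abs_mult)
    also have "\<dots> \<le> C\<eta> * (Mc / real (Suc m))" by (rule le)
    also have "\<dots> = (Mc * C\<eta>) * inverse (real (Suc m))" by (simp add: divide_inverse)
    finally show ?thesis .
  qed
  have lim2: "s \<longlonglongrightarrow> 0"
  proof (rule Lim_null_comparison)
    show "\<forall>\<^sub>F m in sequentially. norm (s m) \<le> (Mc * C\<eta>) * inverse (real (Suc m))" using bnd by simp
    show "(\<lambda>m. (Mc * C\<eta>) * inverse (real (Suc m))) \<longlonglongrightarrow> 0"
      by (rule tendsto_mult_right_zero[OF LIMSEQ_inverse_real_of_nat])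
  qed
  show ?thesis using LIMSEQ_unique[OF lim1 lim2] .
qed

lemma zero_set: "AE x in LM. a x = 0 \<longrightarrow> P x $ i = 0"
proof -
  define Z where "Z x = (if a x = 0 then 1 else (0::real))" for x
  have Zm: "Z \<in> borel_measurable LM" unfolding Z_def by (rule Z_meas)
  have sZ: "sqi LM (\<lambda>x. Z x * P x $ i)"
    by (rule sqi_mult_bdd[OF P_sqi Zm, of 1]) (simp add: Z_def)
  have l: "(\<lambda>k. LINT x|LM. Z x * P x $ i * pd i (\<phi>s k) x) \<longlonglongrightarrow> (LINT x|LM. Z x * P x $ i * P x $ i)"
    by (rule lim_P[OF sZ])
  have "(LINT x|LM. Z x * P x $ i * pd i (\<phi>s k) x) = 0" for k
    unfolding Z_def by (rule zero_set_weak[OF test_fn_pd[OF \<phi>_test]])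
  then have "(\<lambda>k. 0) \<longlonglongrightarrow> (LINT x|LM. Z x * P x $ i * P x $ i)" using l by simp
  then have "0 = (LINT x|LM. Z x * P x $ i * P x $ i)" by (rule LIMSEQ_unique[OF tendsto_const])
  then have I0: "(LINT x|LM. Z x * P x $ i * P x $ i) = 0" by simp
  have int: "integrable LM (\<lambda>x. Z x * P x $ i * P x $ i)" by (rule sqi_int_mult[OF sZ P_sqi])
  have nn: "AE x in LM. 0 \<le> Z x * P x $ i * P x $ i"
  proof (rule AE_I2)
    fix x show "0 \<le> Z x * P x $ i * P x $ i" by (simp add: Z_def)
  qed
  have "AE x in LM. Z x * P x $ i * P x $ i = 0"
    using integral_nonneg_eq_0_iff_AE[OF int nn] I0 by simp
  then show ?thesis by eventually_elim (auto simp: Z_def split: if_splits)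
qed

end

locale sob2 = sob \<Omega> a P \<phi>s Lb for \<Omega> :: "(real^'n::finite) set" and a P \<phi>s Lb +
  fixes b :: "real^'n \<Rightarrow> real" and B :: "real^'n \<Rightarrow> real^'n"
  assumes b_meas: "b \<in> borel_measurable (lebesgue_on \<Omega>)"
    and b_bd: "AE x in lebesgue_on \<Omega>. 0 \<le> b x \<and> b x \<le> Lb"
    and ab0: "\<And>x. a x * b x = 0"
    and B_sqi: "\<And>i. sqi (lebesgue_on \<Omega>) (\<lambda>x. B x $ i)"
    and b_weak: "\<And>\<eta> i. test_fn \<Omega> \<eta> \<Longrightarrow>
       (LINT x|lebesgue_on \<Omega>. b x * pd i \<eta> x) = - (LINT x|lebesgue_on \<Omega>. B x $ i * \<eta> x)"
begin

lemma b_sqi: "sqi LM b"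
  by (rule sqi_bdd[OF fm b_meas, of "\<bar>Lb\<bar>"]) (use b_bd in \<open>eventually_elim, auto\<close>)

lemma bP0: "AE x in LM. b x * P x $ i = 0"
  using zero_set[of i]
proof eventually_elim
  case (elim x)
  show ?case
  proof (cases "b x = 0")
    case False then have "a x = 0" using ab0[of x] by simp
    then show ?thesis using elim by simp
  qed simp
qed

definition DD :: "'n \<Rightarrow> (real \<Rightarrow> real) \<Rightarrow> bool" where
  "DD i F \<longleftrightarrow> continuous_on UNIV F \<and> (\<forall>\<eta>. test_fn \<Omega> \<eta> \<longrightarrow> (LINT x|LM. B x $ i * F (a x) * \<eta> x) = 0)"

lemma sqi_B\<eta>: "test_fn \<Omega> \<eta> \<Longrightarrow> sqi LM (\<lambda>x. B x $ i * \<eta> x)"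
proof -
  assume \<eta>: "test_fn \<Omega> \<eta>"
  have "sqi LM (\<lambda>x. \<eta> x * B x $ i)" by (rule sqi_test_mult[OF \<eta> B_sqi])
  moreover have "(\<lambda>x. \<eta> x * B x $ i) = (\<lambda>x. B x $ i * \<eta> x)" by (simp add: fun_eq_iff)
  ultimately show ?thesis by simp
qed

lemma DD_id: "DD i (\<lambda>t. t)"
  unfolding DD_def
proof (intro conjI allI impI)
  show "continuous_on UNIV (\<lambda>t::real. t)" by (rule continuous_on_id)
  fix \<eta> assume \<eta>: "test_fn \<Omega> \<eta>"
  have su: "sqi LM (\<lambda>x. B x $ i * \<eta> x)" by (rule sqi_B\<eta>[OF \<eta>])
  have sb1: "sqi LM (\<lambda>x. b x * pd i \<eta> x)"
    using sqi_test_mult[OF test_fn_pd[OF \<eta>] b_sqi] by (simp add: mult.commute)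
  have sb2: "sqi LM (\<lambda>x. b x * \<eta> x)"
    using sqi_test_mult[OF \<eta> b_sqi] by (simp add: mult.commute)
  have l1: "(\<lambda>k. LINT x|LM. B x $ i * \<eta> x * \<phi>s k x) \<longlonglongrightarrow> (LINT x|LM. B x $ i * \<eta> x * a x)"
    by (rule lim_a[OF su])
  have e: "(LINT x|LM. B x $ i * \<eta> x * \<phi>s k x) =
     - ((LINT x|LM. b x * pd i \<eta> x * \<phi>s k x) + (LINT x|LM. b x * \<eta> x * pd i (\<phi>s k) x))" for k
  proof -
    have t: "test_fn \<Omega> (\<lambda>x. \<phi>s k x * \<eta> x)" by (rule test_\<phi>_mult[OF \<eta>])
    have i1: "integrable LM (\<lambda>x. b x * pd i \<eta> x * \<phi>s k x)" by (rule sqi_int_mult[OF sb1 \<phi>_sqi])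
    have i2: "integrable LM (\<lambda>x. b x * \<eta> x * pd i (\<phi>s k) x)" by (rule sqi_int_mult[OF sb2 d\<phi>_sqi])
    have "(LINT x|LM. b x * pd i (\<lambda>x. \<phi>s k x * \<eta> x) x)
        = (LINT x|LM. b x * pd i \<eta> x * \<phi>s k x + b x * \<eta> x * pd i (\<phi>s k) x)"
      apply (rule Bochner_Integration.integral_cong[OF refl])
      apply (simp only: pd_\<phi>_mult[OF \<eta>])
      apply (simp add: algebra_simps)
      done
    also have "\<dots> = (LINT x|LM. b x * pd i \<eta> x * \<phi>s k x) + (LINT x|LM. b x * \<eta> x * pd i (\<phi>s k) x)"
      by (rule Bochner_Integration.integral_add[OF i1 i2])
    finally have A: "(LINT x|LM. b x * pd i (\<lambda>x. \<phi>s k x * \<eta> x) x)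
        = (LINT x|LM. b x * pd i \<eta> x * \<phi>s k x) + (LINT x|LM. b x * \<eta> x * pd i (\<phi>s k) x)" .
    have B: "(LINT x|LM. B x $ i * (\<phi>s k x * \<eta> x)) = (LINT x|LM. B x $ i * \<eta> x * \<phi>s k x)"
      by (rule Bochner_Integration.integral_cong[OF refl]) (simp add: algebra_simps)
    show ?thesis using b_weak[OF t, of i] A B by linarith
  qed
  have l2: "(\<lambda>k. - ((LINT x|LM. b x * pd i \<eta> x * \<phi>s k x) + (LINT x|LM. b x * \<eta> x * pd i (\<phi>s k) x)))
      \<longlonglongrightarrow> - ((LINT x|LM. b x * pd i \<eta> x * a x) + (LINT x|LM. b x * \<eta> x * P x $ i))"
    by (intro tendsto_add tendsto_minus lim_a[OF sb1] lim_P[OF sb2])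
  have z1: "(LINT x|LM. b x * pd i \<eta> x * a x) = 0"
  proof -
    have "(\<lambda>x. b x * pd i \<eta> x * a x) = (\<lambda>x. 0)"
    proof
      fix x show "b x * pd i \<eta> x * a x = 0" using ab0[of x] by (auto simp: algebra_simps)
    qed
    then show ?thesis by simp
  qed
  have z2: "(LINT x|LM. b x * \<eta> x * P x $ i) = 0"
  proof (rule integral_eq_zero_AE)
    show "AE x in LM. b x * \<eta> x * P x $ i = 0" using bP0[of i] by eventually_elim (simp add: algebra_simps)
  qed
  have "(LINT x|LM. B x $ i * \<eta> x * a x) = 0"
    using LIMSEQ_unique[OF l1 l2[folded e]] z1 z2 by simp
  moreover have "(LINT x|LM. B x $ i * \<eta> x * a x) = (LINT x|LM. B x $ i * a x * \<eta> x)"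
    by (rule Bochner_Integration.integral_cong[OF refl]) (simp add: algebra_simps)
  ultimately show "(LINT x|LM. B x $ i * a x * \<eta> x) = 0" by simp
qed

lemma DD_mult: "DD i F \<Longrightarrow> DD i (\<lambda>t. t * F t)"
  unfolding DD_def
proof (elim conjE, intro conjI allI impI)
  assume c: "continuous_on UNIV F"
    and D: "\<forall>\<eta>. test_fn \<Omega> \<eta> \<longrightarrow> (LINT x|LM. B x $ i * F (a x) * \<eta> x) = 0"
  show "continuous_on UNIV (\<lambda>t. t * F t)" using c by (intro continuous_intros)
  fix \<eta> assume \<eta>: "test_fn \<Omega> \<eta>"
  have su: "sqi LM (\<lambda>x. F (a x) * (B x $ i * \<eta> x))" by (rule sqi_F[OF c sqi_B\<eta>[OF \<eta>]])
  have l1: "(\<lambda>k. LINT x|LM. F (a x) * (B x $ i * \<eta> x) * \<phi>s k x) \<longlonglongrightarrow> (LINT x|LM. F (a x) * (B x $ i * \<eta> x) * a x)"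
    by (rule lim_a[OF su])
  have "(LINT x|LM. F (a x) * (B x $ i * \<eta> x) * \<phi>s k x) = 0" for k
  proof -
    have "(LINT x|LM. F (a x) * (B x $ i * \<eta> x) * \<phi>s k x) = (LINT x|LM. B x $ i * F (a x) * (\<phi>s k x * \<eta> x))"
      by (rule Bochner_Integration.integral_cong[OF refl]) (simp add: algebra_simps)
    also have "\<dots> = 0" using D test_\<phi>_mult[OF \<eta>] by blast
    finally show ?thesis .
  qed
  then have "(\<lambda>k. 0) \<longlonglongrightarrow> (LINT x|LM. F (a x) * (B x $ i * \<eta> x) * a x)" using l1 by simp
  then have "0 = (LINT x|LM. F (a x) * (B x $ i * \<eta> x) * a x)" by (rule LIMSEQ_unique[OF tendsto_const])
  moreover have "(LINT x|LM. F (a x) * (B x $ i * \<eta> x) * a x) = (LINT x|LM. B x $ i * (a x * F (a x)) * \<eta> x)"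
    by (rule Bochner_Integration.integral_cong[OF refl]) (simp add: algebra_simps)
  ultimately show "(LINT x|LM. B x $ i * (a x * F (a x)) * \<eta> x) = 0" by simp
qed

lemma int_BF\<eta>: "continuous_on UNIV F \<Longrightarrow> test_fn \<Omega> \<eta> \<Longrightarrow> integrable LM (\<lambda>x. B x $ i * F (a x) * \<eta> x)"
proof -
  assume c: "continuous_on UNIV F" and \<eta>: "test_fn \<Omega> \<eta>"
  have "integrable LM (\<lambda>x. F (a x) * (B x $ i * \<eta> x))" by (rule sqi_int[OF fm sqi_F[OF c sqi_B\<eta>[OF \<eta>]]])
  moreover have "(\<lambda>x. F (a x) * (B x $ i * \<eta> x)) = (\<lambda>x. B x $ i * F (a x) * \<eta> x)" by (simp add: fun_eq_iff)
  ultimately show ?thesis by simp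
qed

lemma DD_lin: "DD i F \<Longrightarrow> DD i G \<Longrightarrow> DD i (\<lambda>t. F t + c * G t)"
  unfolding DD_def
proof (elim conjE, intro conjI allI impI)
  assume c: "continuous_on UNIV F" "continuous_on UNIV G"
    and D1: "\<forall>\<eta>. test_fn \<Omega> \<eta> \<longrightarrow> (LINT x|LM. B x $ i * F (a x) * \<eta> x) = 0"
    and D2: "\<forall>\<eta>. test_fn \<Omega> \<eta> \<longrightarrow> (LINT x|LM. B x $ i * G (a x) * \<eta> x) = 0"
  show "continuous_on UNIV (\<lambda>t. F t + c * G t)" using c by (intro continuous_intros)
  fix \<eta> assume \<eta>: "test_fn \<Omega> \<eta>"
  have "(LINT x|LM. B x $ i * (F (a x) + c * G (a x)) * \<eta> x)
     = (LINT x|LM. B x $ i * F (a x) * \<eta> x + c * (B x $ i * G (a x) * \<eta> x))"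
    by (rule Bochner_Integration.integral_cong[OF refl]) (simp add: algebra_simps)
  also have "\<dots> = (LINT x|LM. B x $ i * F (a x) * \<eta> x) + c * (LINT x|LM. B x $ i * G (a x) * \<eta> x)"
    using int_BF\<eta>[OF c(1) \<eta>] int_BF\<eta>[OF c(2) \<eta>] by simp
  also have "\<dots> = 0" using D1 D2 \<eta> by simp
  finally show "(LINT x|LM. B x $ i * (F (a x) + c * G (a x)) * \<eta> x) = 0" .
qed

lemma DD_U: "DD i (U m)"
proof (induction m)
  case 0
  have "DD i (\<lambda>t. 0)" unfolding DD_def by simp
  moreover have "U 0 = (\<lambda>t. 0)" by (simp add: fun_eq_iff U_def)
  ultimately show ?case by simp
next
  case (Suc m)
  have h1: "DD i (\<lambda>t. t * U m t)" by (rule DD_mult[OF Suc.IH])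
  have h2: "DD i (\<lambda>t. t + (-1) * (t * U m t))" by (rule DD_lin[OF DD_id h1])
  have h3: "DD i (\<lambda>t. U m t + (1 / Mc) * (t + (-1) * (t * U m t)))" by (rule DD_lin[OF Suc.IH h2])
  moreover have "(\<lambda>t. U m t + (1 / Mc) * (t + (-1) * (t * U m t))) = U (Suc m)"
    by (simp add: fun_eq_iff U_Suc)
  ultimately show ?case by simp
qed

end

context sob2 begin

lemma BP0: "(LINT x|LM. B x $ i * P x $ i) = 0"
proof -
  define NZ where "NZ x = (if a x = 0 then 0 else (1::real))" for x
  have Uc: "continuous_on UNIV (U m)" for m using CC_U[of i m] unfolding CC_def by blast
  have Bm: "(\<lambda>x. B x $ i) \<in> borel_measurable LM" using B_sqi[of i] unfolding sqi_def by blast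
  have each: "(LINT x|LM. B x $ i * U m (a x) * P x $ i) = 0" for m
  proof -
    have su: "sqi LM (\<lambda>x. U m (a x) * B x $ i)" by (rule sqi_F[OF Uc B_sqi])
    have l: "(\<lambda>k. LINT x|LM. U m (a x) * B x $ i * pd i (\<phi>s k) x) \<longlonglongrightarrow> (LINT x|LM. U m (a x) * B x $ i * P x $ i)"
      by (rule lim_P[OF su])
    have "(LINT x|LM. U m (a x) * B x $ i * pd i (\<phi>s k) x) = 0" for k
    proof -
      have "(LINT x|LM. U m (a x) * B x $ i * pd i (\<phi>s k) x) = (LINT x|LM. B x $ i * U m (a x) * pd i (\<phi>s k) x)"
        by (rule Bochner_Integration.integral_cong[OF refl]) (simp add: algebra_simps)
      also have "\<dots> = 0" using DD_U[of i m] test_fn_pd[OF \<phi>_test] unfolding DD_def by blast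
      finally show ?thesis .
    qed
    then have "(\<lambda>k. 0) \<longlonglongrightarrow> (LINT x|LM. U m (a x) * B x $ i * P x $ i)" using l by simp
    then have "0 = (LINT x|LM. U m (a x) * B x $ i * P x $ i)" by (rule LIMSEQ_unique[OF tendsto_const])
    moreover have "(LINT x|LM. U m (a x) * B x $ i * P x $ i) = (LINT x|LM. B x $ i * U m (a x) * P x $ i)"
      by (rule Bochner_Integration.integral_cong[OF refl]) (simp add: algebra_simps)
    ultimately show ?thesis by simp
  qed
  have lim: "(\<lambda>m. LINT x|LM. B x $ i * U m (a x) * P x $ i) \<longlonglongrightarrow> (LINT x|LM. B x $ i * NZ x * P x $ i)"
  proof (rule integral_dominated_convergence[where w="\<lambda>x. \<bar>B x $ i * P x $ i\<bar>"])
    have "NZ \<in> borel_measurable LM" unfolding NZ_def by measurable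
    then show "(\<lambda>x. B x $ i * NZ x * P x $ i) \<in> borel_measurable LM"
      using Bm P_meas by (intro borel_measurable_times)
    show "(\<lambda>x. B x $ i * U m (a x) * P x $ i) \<in> borel_measurable LM" for m
      using Bm F_meas[OF Uc] P_meas by (intro borel_measurable_times)
    show "integrable LM (\<lambda>x. \<bar>B x $ i * P x $ i\<bar>)"
      using sqi_int_mult[OF B_sqi P_sqi] by simp
    show "AE x in LM. (\<lambda>m. B x $ i * U m (a x) * P x $ i) \<longlonglongrightarrow> B x $ i * NZ x * P x $ i"
      using a_bd
    proof eventually_elim
      case (elim x)
      have "(\<lambda>m. 1 - (1 - a x / Mc) ^ m) \<longlonglongrightarrow> 1 - (if a x = 0 then 1 else 0)"
        by (intro tendsto_diff tendsto_const W_lim) (use elim in auto)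
      then have "(\<lambda>m. U m (a x)) \<longlonglongrightarrow> NZ x" unfolding U_def NZ_def by (simp split: if_splits)
      then show ?case by (intro tendsto_mult_right tendsto_mult_left)
    qed
    show "AE x in LM. norm (B x $ i * U m (a x) * P x $ i) \<le> \<bar>B x $ i * P x $ i\<bar>" for m
      using a_bd
    proof eventually_elim
      case (elim x)
      have "\<bar>U m (a x)\<bar> \<le> 1" using U_bdd elim by simp
      then have "\<bar>U m (a x)\<bar> * \<bar>B x $ i * P x $ i\<bar> \<le> 1 * \<bar>B x $ i * P x $ i\<bar>" by (rule mult_right_mono) simp
      then show ?case by (simp add: abs_mult algebra_simps)
    qed
  qed
  have "(LINT x|LM. B x $ i * NZ x * P x $ i) = (LINT x|LM. B x $ i * P x $ i)"
  proof (rule integral_cong_AE)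
    have "NZ \<in> borel_measurable LM" unfolding NZ_def by measurable
    then show "(\<lambda>x. B x $ i * NZ x * P x $ i) \<in> borel_measurable LM"
      using Bm P_meas by (intro borel_measurable_times)
    show "(\<lambda>x. B x $ i * P x $ i) \<in> borel_measurable LM"
      using Bm P_meas by (intro borel_measurable_times)
    show "AE x in LM. B x $ i * NZ x * P x $ i = B x $ i * P x $ i"
      using zero_set[of i] by eventually_elim (simp add: NZ_def)
  qed
  then show ?thesis using LIMSEQ_unique[OF lim] each by simp
qed

end

context sob begin

lemma a_zero:
  assumes P0: "\<And>i. AE x in LM. P x $ i = 0" and bdd: "bounded \<Omega>"
  shows "AE x in LM. a x = 0"
proof -
  obtain j :: 'n where True by blast
  obtain R where R: "\<forall>x\<in>\<Omega>. norm x \<le> R" using bdd unfolding bounded_iff by blast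
  have Xm: "(\<lambda>x. x $ j) \<in> borel_measurable LM"
    by (intro borel_lebesgue_on borel_measurable_continuous_onI cont_coord)
  have XR: "AE x in LM. \<bar>x $ j\<bar> \<le> R"
  proof (rule AE_I2)
    fix x assume "x \<in> space LM"
    then have "norm x \<le> R" using R by simp
    then show "\<bar>x $ j\<bar> \<le> R" using component_le_norm_cart[of x j] by simp
  qed
  have sX: "sqi LM (\<lambda>x. x $ j * a x)" by (rule sqi_mult_bdd[OF a_sqi Xm XR])
  have dX: "(\<lambda>y. y $ j) differentiable (at x)" for x
    by (intro bounded_linear_imp_differentiable bounded_linear_vec_nth)
  have e: "(LINT x|LM. a x * \<phi>s k x) + (LINT x|LM. x $ j * a x * pd j (\<phi>s k) x) = 0" for k
  proof -
    have t: "test_fn \<Omega> (\<lambda>x. x $ j * \<phi>s k x)" by (rule test_fn_mult[OF \<phi>_test smooth_coord])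
    have pdz: "pd j (\<lambda>x. x $ j * \<phi>s k x) x = x $ j * pd j (\<phi>s k) x + \<phi>s k x" for x
      by (simp add: pd_mult[OF dX smooth_diff[OF \<phi>_smooth]] pd_coord)
    have "(LINT x|LM. a x * pd j (\<lambda>x. x $ j * \<phi>s k x) x) = - (LINT x|LM. P x $ j * (x $ j * \<phi>s k x))"
      by (rule a_weak[OF t])
    also have "(LINT x|LM. P x $ j * (x $ j * \<phi>s k x)) = 0"
      by (rule integral_eq_zero_AE) (use P0[of j] in eventually_elim; simp)
    finally have z: "(LINT x|LM. a x * pd j (\<lambda>x. x $ j * \<phi>s k x) x) = 0" by simp
    have i1: "integrable LM (\<lambda>x. a x * \<phi>s k x)" by (rule sqi_int_mult[OF a_sqi \<phi>_sqi])
    have i2: "integrable LM (\<lambda>x. x $ j * a x * pd j (\<phi>s k) x)" by (rule sqi_int_mult[OF sX d\<phi>_sqi])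
    have "(LINT x|LM. a x * pd j (\<lambda>x. x $ j * \<phi>s k x) x) = (LINT x|LM. a x * \<phi>s k x + x $ j * a x * pd j (\<phi>s k) x)"
      apply (rule Bochner_Integration.integral_cong[OF refl])
      apply (simp only: pdz)
      apply (simp add: algebra_simps)
      done
    also have "\<dots> = (LINT x|LM. a x * \<phi>s k x) + (LINT x|LM. x $ j * a x * pd j (\<phi>s k) x)"
      by (rule Bochner_Integration.integral_add[OF i1 i2])
    finally show ?thesis using z by simp
  qed
  have l: "(\<lambda>k. (LINT x|LM. a x * \<phi>s k x) + (LINT x|LM. x $ j * a x * pd j (\<phi>s k) x))
     \<longlonglongrightarrow> (LINT x|LM. a x * a x) + (LINT x|LM. x $ j * a x * P x $ j)"
    by (intro tendsto_add lim_a[OF a_sqi] lim_P[OF sX])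
  have z2: "(LINT x|LM. x $ j * a x * P x $ j) = 0"
    by (rule integral_eq_zero_AE) (use P0[of j] in eventually_elim; simp)
  have "(\<lambda>k. 0) \<longlonglongrightarrow> (LINT x|LM. a x * a x)" using l e z2 by simp
  then have "0 = (LINT x|LM. a x * a x)" by (rule LIMSEQ_unique[OF tendsto_const])
  then have I0: "(LINT x|LM. a x * a x) = 0" by simp
  have int: "integrable LM (\<lambda>x. a x * a x)" by (rule sqi_int_mult[OF a_sqi a_sqi])
  have nn: "AE x in LM. 0 \<le> a x * a x" by (rule AE_I2) simp
  have "AE x in LM. a x * a x = 0" using integral_nonneg_eq_0_iff_AE[OF int nn] I0 by simp
  then show ?thesis by eventually_elim simp
qed

end

theorem lemma4p4:
  fixes \<Omega> :: "(real^'n::finite) set"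
    and \<sigma> C \<gamma> p lam L :: real
    and h H \<psi> g :: "real \<Rightarrow> real"
    and f vl vu :: "real^'n \<Rightarrow> real"
  assumes "open \<Omega>" and "bounded \<Omega>"
    and "\<sigma> > 0"
    and "continuous_on {0..<\<sigma>} h"
    and "\<forall>s\<in>{0..<\<sigma>}. h s \<ge> 0"
    and "strict_mono_on {0..<\<sigma>} h"
    and "filterlim h at_top (at_left \<sigma>)"
    and "1 \<le> \<gamma>" and "\<gamma> < 2" and "C > 0"
    and "((\<lambda>s. (\<sigma> - s) powr \<gamma> * h s) \<longlongrightarrow> C) (at_left \<sigma>)"
    and "p \<ge> 1" and "p > real CARD('n) / 2"
    and "Lp p \<Omega> f" and "AE x in lebesgue_on \<Omega>. f x \<ge> 0"
    and "lam > 0"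
    and H_def: "\<forall>s. H s = integral {0..s} h"
    and \<psi>_def: "\<forall>s. \<psi> s = integral {0..s} (\<lambda>t. exp (- H t))"
    and L_def: "L = \<psi> \<sigma>"
    and g_def: "\<forall>s. g s = (if s < L then exp (- H (the_inv_into {0..<\<sigma>} \<psi> s)) else 0)"
    and "H1 \<Omega> vl" and "H1 \<Omega> vu"
    and "AE x in lebesgue_on \<Omega>. 0 \<le> vl x \<and> vl x \<le> L"
    and "AE x in lebesgue_on \<Omega>. 0 \<le> vu x \<and> vu x \<le> L"
    and "\<forall>\<phi>. H10 \<Omega> \<phi> \<and> (AE x in lebesgue_on \<Omega>. \<phi> x \<ge> 0) \<longrightarrow>
           integral\<^sup>L (lebesgue_on \<Omega>) (\<lambda>x. wgrad \<Omega> vl x \<bullet> wgrad \<Omega> \<phi> x)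
             \<le> integral\<^sup>L (lebesgue_on \<Omega>) (\<lambda>x. lam * f x * g (vl x) * \<phi> x)"
    and "\<forall>\<phi>. H10 \<Omega> \<phi> \<and> (AE x in lebesgue_on \<Omega>. \<phi> x \<ge> 0) \<longrightarrow>
           integral\<^sup>L (lebesgue_on \<Omega>) (\<lambda>x. wgrad \<Omega> vu x \<bullet> wgrad \<Omega> \<phi> x)
             \<ge> integral\<^sup>L (lebesgue_on \<Omega>) (\<lambda>x. lam * f x * g (vu x) * \<phi> x)"
    and "H10 \<Omega> (\<lambda>x. max 0 (vl x - vu x))"
  shows "AE x in lebesgue_on \<Omega>. vl x \<le> vu x"
proof -
  let ?M = "lebesgue_on \<Omega>"
  have fm: "finite_measure ?M"
    by (rule finite_measure_lebesgue_on[OF lmeasurable_open[OF assms(2) assms(1)]])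
  have L2sqi: "L2 \<Omega> u = sqi ?M u" for u unfolding L2_def sqi_def ..
  have wg: "weak_grad \<Omega> u (wgrad \<Omega> u)" if "H1 \<Omega> u" for u
  proof -
    from that obtain G where "weak_grad \<Omega> u G" unfolding H1_def by blast
    then show ?thesis unfolding wgrad_def by (rule someI[where P="weak_grad \<Omega> u"])
  qed
  define a where "a = (\<lambda>x. max 0 (vl x - vu x))"
  define b where "b = (\<lambda>x. max 0 (vu x - vl x))"
  define P where "P = wgrad \<Omega> a"
  define Gl where "Gl = wgrad \<Omega> vl"
  define Gu where "Gu = wgrad \<Omega> vu"
  define B where "B = (\<lambda>x. P x - Gl x + Gu x)"
  have H10a: "H10 \<Omega> a" using assms(27) unfolding a_def .
  have H1a: "H1 \<Omega> a" using H10a unfolding H10_def by blast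
  obtain \<phi>s where \<phi>s: "\<forall>k. test_fn \<Omega> (\<phi>s k)" and lim:
    "(\<lambda>k. (LINT x|?M. (\<phi>s k x - a x)\<^sup>2) + (\<Sum>i\<in>UNIV. LINT x|?M. (pd i (\<phi>s k) x - P x $ i)\<^sup>2)) \<longlonglongrightarrow> 0"
    using H10a unfolding H10_def P_def by blast
  have wa: "weak_grad \<Omega> a P" using wg[OF H1a] unfolding P_def .
  have wl: "weak_grad \<Omega> vl Gl" using wg[OF assms(21)] unfolding Gl_def .
  have wu: "weak_grad \<Omega> vu Gu" using wg[OF assms(22)] unfolding Gu_def .
  have vl_sqi: "sqi ?M vl" using assms(21) unfolding H1_def L2sqi by blast
  have vu_sqi: "sqi ?M vu" using assms(22) unfolding H1_def L2sqi by blast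
  have vlm: "vl \<in> borel_measurable ?M" using vl_sqi unfolding sqi_def by blast
  have vum: "vu \<in> borel_measurable ?M" using vu_sqi unfolding sqi_def by blast
  have am: "a \<in> borel_measurable ?M" unfolding a_def using vlm vum by measurable
  have bm: "b \<in> borel_measurable ?M" unfolding b_def using vlm vum by measurable
  have a_bd: "AE x in ?M. 0 \<le> a x \<and> a x \<le> L"
    using assms(23,24) by eventually_elim (auto simp: a_def)
  have b_bd: "AE x in ?M. 0 \<le> b x \<and> b x \<le> L"
    using assms(23,24) by eventually_elim (auto simp: b_def)
  have P_sqi: "sqi ?M (\<lambda>x. P x $ i)" for i using wa unfolding weak_grad_def L2sqi by blast
  have Gl_sqi: "sqi ?M (\<lambda>x. Gl x $ i)" for i using wl unfolding weak_grad_def L2sqi by blast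
  have Gu_sqi: "sqi ?M (\<lambda>x. Gu x $ i)" for i using wu unfolding weak_grad_def L2sqi by blast
  define T0 where "T0 k = (LINT x|?M. (\<phi>s k x - a x)\<^sup>2)" for k
  define Ti where "Ti i k = (LINT x|?M. (pd i (\<phi>s k) x - P x $ i)\<^sup>2)" for i k
  have T0nn: "0 \<le> T0 k" for k unfolding T0_def by (rule integral_nonneg_AE) simp
  have Tinn: "0 \<le> Ti i k" for i k unfolding Ti_def by (rule integral_nonneg_AE) simp
  have lim': "(\<lambda>k. T0 k + (\<Sum>i\<in>UNIV. Ti i k)) \<longlonglongrightarrow> 0" using lim unfolding T0_def Ti_def .
  have T0lim: "T0 \<longlonglongrightarrow> 0"
  proof (rule tendsto_sandwich[OF _ _ tendsto_const lim'])
    show "\<forall>\<^sub>F k in sequentially. 0 \<le> T0 k" using T0nn by simp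
    show "\<forall>\<^sub>F k in sequentially. T0 k \<le> T0 k + (\<Sum>i\<in>UNIV. Ti i k)"
      using Tinn by (simp add: sum_nonneg)
  qed
  have Tilim: "Ti i \<longlonglongrightarrow> 0" for i
  proof (rule tendsto_sandwich[OF _ _ tendsto_const lim'])
    show "\<forall>\<^sub>F k in sequentially. 0 \<le> Ti i k" using Tinn by simp
    have "Ti i k \<le> T0 k + (\<Sum>i\<in>UNIV. Ti i k)" for k
    proof -
      have "Ti i k \<le> (\<Sum>i\<in>UNIV. Ti i k)" by (rule member_le_sum) (use Tinn in auto)
      then show ?thesis using T0nn[of k] by linarith
    qed
    then show "\<forall>\<^sub>F k in sequentially. Ti i k \<le> T0 k + (\<Sum>i\<in>UNIV. Ti i k)" by simp
  qed
  have aw: "(LINT x|?M. a x * pd i \<eta> x) = - (LINT x|?M. P x $ i * \<eta> x)" if "test_fn \<Omega> \<eta>" for \<eta> i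
    using wa that unfolding weak_grad_def by blast
  have \<phi>t: "test_fn \<Omega> (\<phi>s k)" for k using \<phi>s by blast
  have \<phi>l: "(\<lambda>k. LINT x|?M. (\<phi>s k x - a x)\<^sup>2) \<longlonglongrightarrow> 0" using T0lim unfolding T0_def .
  have d\<phi>l: "(\<lambda>k. LINT x|?M. (pd i (\<phi>s k) x - P x $ i)\<^sup>2) \<longlonglongrightarrow> 0" for i using Tilim unfolding Ti_def .
  have Ssob: "sob \<Omega> a P \<phi>s L" by (rule sob.intro[OF fm am a_bd P_sqi aw \<phi>t \<phi>l d\<phi>l])
  interpret S: sob \<Omega> a P \<phi>s L by (rule Ssob)
  have B_sqi: "sqi ?M (\<lambda>x. B x $ i)" for i
    using sqi_add[OF sqi_diff[OF P_sqi Gl_sqi] Gu_sqi, of i i i] unfolding B_def by simp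
  have bweak: "(LINT x|?M. b x * pd i \<eta> x) = - (LINT x|?M. B x $ i * \<eta> x)" if \<eta>: "test_fn \<Omega> \<eta>" for \<eta> i
  proof -
    have sd: "sqi ?M (pd i \<eta>)" by (rule S.test_sqi[OF test_fn_pd[OF \<eta>]])
    have s\<eta>: "sqi ?M \<eta>" by (rule S.test_sqi[OF \<eta>])
    have "(LINT x|?M. b x * pd i \<eta> x) = (LINT x|?M. a x * pd i \<eta> x - vl x * pd i \<eta> x + vu x * pd i \<eta> x)"
      by (rule Bochner_Integration.integral_cong[OF refl]) (simp add: a_def b_def max_def algebra_simps)
    also have "\<dots> = (LINT x|?M. a x * pd i \<eta> x) - (LINT x|?M. vl x * pd i \<eta> x) + (LINT x|?M. vu x * pd i \<eta> x)"
      using sqi_int_mult[OF S.a_sqi sd] sqi_int_mult[OF vl_sqi sd] sqi_int_mult[OF vu_sqi sd] by simp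
    also have "\<dots> = - (LINT x|?M. P x $ i * \<eta> x) + (LINT x|?M. Gl x $ i * \<eta> x) - (LINT x|?M. Gu x $ i * \<eta> x)"
      using wa wl wu \<eta> unfolding weak_grad_def by simp
    also have "\<dots> = - (LINT x|?M. P x $ i * \<eta> x - Gl x $ i * \<eta> x + Gu x $ i * \<eta> x)"
      using sqi_int_mult[OF P_sqi s\<eta>] sqi_int_mult[OF Gl_sqi s\<eta>] sqi_int_mult[OF Gu_sqi s\<eta>] by simp
    also have "\<dots> = - (LINT x|?M. B x $ i * \<eta> x)"
      by (rule arg_cong[where f=uminus], rule Bochner_Integration.integral_cong[OF refl]) (simp add: B_def algebra_simps)
    finally show ?thesis .
  qed
  have ab0: "a x * b x = 0" for x by (simp add: a_def b_def max_def)
  have Ssob2: "sob2 \<Omega> a P \<phi>s L b B"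
    by (rule sob2.intro[OF Ssob sob2_axioms.intro[OF bm b_bd ab0 B_sqi bweak]])
  interpret S2: sob2 \<Omega> a P \<phi>s L b B by (rule Ssob2)
  have gp: "\<forall>s. 0 \<le> g s" "\<forall>s\<in>{0..L}. g s \<le> 1" "0 \<le> L"
    "\<forall>s1 s2. 0 \<le> s1 \<longrightarrow> s1 \<le> s2 \<longrightarrow> s2 \<le> L \<longrightarrow> g s2 \<le> g s1"
    "g \<in> borel_measurable borel"
    by (rule g_props[OF assms(3,4,5) H_def \<psi>_def L_def g_def])+
  have fmeas: "f \<in> borel_measurable ?M" using assms(14) unfolding Lp_def by blast
  have fint: "integrable ?M f"
  proof (rule Bochner_Integration.integrable_bound)
    have "integrable ?M (\<lambda>x. \<bar>f x\<bar> powr p)" using assms(14) unfolding Lp_def by blast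
    then show "integrable ?M (\<lambda>x. 1 + \<bar>f x\<bar> powr p)"
      by (intro Bochner_Integration.integrable_add finite_measure.integrable_const[OF fm])
    show "f \<in> borel_measurable ?M" by (rule fmeas)
    show "AE x in ?M. norm (f x) \<le> norm (1 + \<bar>f x\<bar> powr p)"
    proof (rule AE_I2)
      fix x
      have "\<bar>f x\<bar> \<le> 1 + \<bar>f x\<bar> powr p"
      proof (cases "\<bar>f x\<bar> \<le> 1")
        case True then show ?thesis using powr_ge_zero[of "\<bar>f x\<bar>" p] by linarith
      next
        case False
        then have "\<bar>f x\<bar> powr 1 \<le> \<bar>f x\<bar> powr p" using assms(12) by (intro powr_mono) simp_all
        moreover have "\<bar>f x\<bar> powr 1 = \<bar>f x\<bar>" using False by simp
        ultimately show ?thesis by linarith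
      qed
      then show "norm (f x) \<le> norm (1 + \<bar>f x\<bar> powr p)" by simp
    qed
  qed
  have intv: "integrable ?M (\<lambda>x. lam * f x * g (v x) * a x)"
    if vm: "v \<in> borel_measurable ?M" and vb: "AE x in ?M. 0 \<le> v x \<and> v x \<le> L" for v
  proof (rule Bochner_Integration.integrable_bound)
    show "integrable ?M (\<lambda>x. (lam * L) * \<bar>f x\<bar>)" using fint by simp
    have gv: "(\<lambda>x. g (v x)) \<in> borel_measurable ?M" by (rule measurable_compose[OF vm gp(5)])
    show "(\<lambda>x. lam * f x * g (v x) * a x) \<in> borel_measurable ?M"
      using fmeas gv am by (intro borel_measurable_times borel_measurable_const)
    show "AE x in ?M. norm (lam * f x * g (v x) * a x) \<le> norm ((lam * L) * \<bar>f x\<bar>)"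
      using vb a_bd
    proof eventually_elim
      case (elim x)
      have g1: "0 \<le> g (v x)" "g (v x) \<le> 1" using gp(1,2) elim by auto
      have "\<bar>lam * f x * g (v x) * a x\<bar> = lam * \<bar>f x\<bar> * g (v x) * a x"
        using assms(16) g1 elim by (simp add: abs_mult)
      also have "\<dots> \<le> lam * \<bar>f x\<bar> * 1 * L"
        using assms(16) g1 elim by (intro mult_mono) (simp_all add: mult_nonneg_nonneg)
      finally show ?case using assms(16) gp(3) by (simp add: abs_mult mult.commute)
    qed
  qed
  have vlb: "AE x in ?M. 0 \<le> vl x \<and> vl x \<le> L" by (rule assms(23))
  have vub: "AE x in ?M. 0 \<le> vu x \<and> vu x \<le> L" by (rule assms(24))
  have Jle: "(LINT x|?M. lam * f x * g (vl x) * a x) \<le> (LINT x|?M. lam * f x * g (vu x) * a x)"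
  proof (rule integral_mono_AE[OF intv[OF vlm vlb] intv[OF vum vub]])
    show "AE x in ?M. lam * f x * g (vl x) * a x \<le> lam * f x * g (vu x) * a x"
      using vlb vub assms(15)
    proof eventually_elim
      case (elim x)
      show ?case
      proof (cases "vl x \<le> vu x")
        case True then have "a x = 0" by (simp add: a_def)
        then show ?thesis by simp
      next
        case False
        then have "g (vl x) \<le> g (vu x)" using gp(4) elim by auto
        moreover have "0 \<le> lam * f x" using assms(16) elim by simp
        ultimately have "lam * f x * g (vl x) \<le> lam * f x * g (vu x)" by (rule mult_left_mono)
        moreover have "0 \<le> a x" by (simp add: a_def)
        ultimately show ?thesis by (rule mult_right_mono)
      qed
    qed
  qed
  have a_nn: "AE x in ?M. 0 \<le> a x" by (rule AE_I2) (simp add: a_def)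
  have Il: "(LINT x|?M. Gl x \<bullet> P x) \<le> (LINT x|?M. lam * f x * g (vl x) * a x)"
    using assms(25) H10a a_nn unfolding Gl_def P_def by blast
  have Iu: "(LINT x|?M. Gu x \<bullet> P x) \<ge> (LINT x|?M. lam * f x * g (vu x) * a x)"
    using assms(26) H10a a_nn unfolding Gu_def P_def by blast
  have inner_sum: "(LINT x|?M. G x \<bullet> P x) = (\<Sum>i\<in>UNIV. LINT x|?M. G x $ i * P x $ i)"
    if "\<And>i. sqi ?M (\<lambda>x. G x $ i)" for G
  proof -
    have "(LINT x|?M. G x \<bullet> P x) = (LINT x|?M. (\<Sum>i\<in>UNIV. G x $ i * P x $ i))"
      by (simp add: inner_vec_def)
    also have "\<dots> = (\<Sum>i\<in>UNIV. LINT x|?M. G x $ i * P x $ i)"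
      by (rule Bochner_Integration.integral_sum) (rule sqi_int_mult[OF that P_sqi])
    finally show ?thesis .
  qed
  have each: "(LINT x|?M. Gl x $ i * P x $ i) - (LINT x|?M. Gu x $ i * P x $ i) = (LINT x|?M. P x $ i * P x $ i)" for i
  proof -
    have "(LINT x|?M. Gl x $ i * P x $ i) - (LINT x|?M. Gu x $ i * P x $ i)
        = (LINT x|?M. Gl x $ i * P x $ i - Gu x $ i * P x $ i)"
      using sqi_int_mult[OF Gl_sqi P_sqi] sqi_int_mult[OF Gu_sqi P_sqi] by simp
    also have "\<dots> = (LINT x|?M. P x $ i * P x $ i - B x $ i * P x $ i)"
      by (rule Bochner_Integration.integral_cong[OF refl]) (simp add: B_def algebra_simps)
    also have "\<dots> = (LINT x|?M. P x $ i * P x $ i) - (LINT x|?M. B x $ i * P x $ i)"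
      using sqi_int_mult[OF P_sqi P_sqi] sqi_int_mult[OF B_sqi P_sqi] by simp
    also have "\<dots> = (LINT x|?M. P x $ i * P x $ i)" using S2.BP0[of i] by simp
    finally show ?thesis .
  qed
  have "(\<Sum>i\<in>UNIV. LINT x|?M. P x $ i * P x $ i) = (LINT x|?M. Gl x \<bullet> P x) - (LINT x|?M. Gu x \<bullet> P x)"
    using inner_sum[OF Gl_sqi] inner_sum[OF Gu_sqi] each by (simp add: sum_subtractf[symmetric])
  also have "\<dots> \<le> 0" using Il Iu Jle by linarith
  finally have sle: "(\<Sum>i\<in>UNIV. LINT x|?M. P x $ i * P x $ i) \<le> 0" .
  have nnP: "0 \<le> (LINT x|?M. P x $ i * P x $ i)" for i by (rule integral_nonneg_AE) simp
  have P0i: "(LINT x|?M. P x $ i * P x $ i) = 0" for i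
  proof -
    have "(\<Sum>i\<in>UNIV. LINT x|?M. P x $ i * P x $ i) = 0" using sle nnP by (simp add: order_antisym sum_nonneg)
    then show ?thesis using sum_nonneg_eq_0_iff[of UNIV "\<lambda>i. LINT x|?M. P x $ i * P x $ i"] nnP by simp
  qed
  have PAE: "AE x in ?M. P x $ i = 0" for i
  proof -
    have int: "integrable ?M (\<lambda>x. P x $ i * P x $ i)" by (rule sqi_int_mult[OF P_sqi P_sqi])
    have nn: "AE x in ?M. 0 \<le> P x $ i * P x $ i" by (rule AE_I2) simp
    have "AE x in ?M. P x $ i * P x $ i = 0" using integral_nonneg_eq_0_iff_AE[OF int nn] P0i[of i] by simp
    then show ?thesis by eventually_elim simp
  qed
  have "AE x in ?M. a x = 0" by (rule S.a_zero[OF PAE assms(2)])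
  then show ?thesis by eventually_elim (simp add: a_def)
qed

end
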